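(* Let $\Gamma$ be a gain operator on $\ell^\infty_+(\mathcal I)$ with $|\mathcal I|<\infty$, and assume the functions $\mu_i$ are uniformly continuous. Then the following are equivalent: (a) there is $\rho\in\mathcal K_\infty$ such that $\Gamma_\rho$ satisfies the NJI condition; (b) there is $\rho\in\mathcal K_\infty$ such that $\Gamma_\rho$ satisfies the uniform NJI condition; (c) there is $\rho\in\mathcal K_\infty$ such that $\Gamma_\rho$ satisfies the $\oplus$-MBI property; (d) there exists a path of strict decay for $\Gamma$; (e) there is $\rho\in\mathcal K_\infty$ such that $\Sigma(\Gamma_\rho)$ is UGAS.
   Context: Let $\mathcal I$ be a nonempty countable index set; $\ell^\infty_+(\mathcal I)$ is the cone of nonnegative real families $s=(s_i)_{i\in\mathcal I}$ with $\|s\|:=\sup_i|s_i|<\infty$, ordered componentwise; $s>0$ means $s\ge0$, $s\ne0$; $\mathbf 1$ is the all-ones vector; $\oplus$ is the componentwise maximum. $\mathcal K$: continuous strictly increasing $\gamma:\mathbb R_+\to\mathbb R_+$ with $\gamma(0)=0$; $\mathcal K_\infty$: unbounded elements of $\mathcal K$, acting componentwise; $\mathcal{KL}$: continuous $\beta$ with $\beta(\cdot,t)\in\mathcal K$ and $\beta(r,\cdot)$ continuous strictly decreasing to $0$ for $r>0$. For $\mathcal J\subset\mathcal I$, $s_{|\mathcal J}$ agrees with $s$ on $\mathcal J$ and is $0$ elsewhere. Gain operator: for each $i$ a finite (possibly empty) $\mathcal I_i\subset\mathcal I\setminus\{i\}$; directed graph $\mathcal G$ with vertices $\mathcal I$ and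 edges $ji$, $j\in\mathcal I_i$; a pointwise equicontinuous family $\gamma_{ij}\in\mathcal K_\infty$ ($ji\in E(\mathcal G)$); functions $\mu_i:\ell^\infty_+(\mathcal I)\to[0,\infty]$ with (M1) some $\xi\in\mathcal K_\infty$ has $\mu_i(0)=0$, $\mu_i(s)\ge\xi(\|s\|)$; (M2) $\mu_i$ monotone; (M3) for each finite $\mathcal J$, $\mu_i$ restricted to vectors vanishing off $\mathcal J$ is finite-valued and continuous; (M4) for each norm-bounded $A$ and $\varepsilon>0$ there is $\delta>0$ with $\sup_i|\mu_i(s_{|\mathcal I_i})-\mu_i(s^0_{|\mathcal I_i})|\le\varepsilon$ whenever $s^0\in A$, $\|s-s^0\|\le\delta$. $\Gamma_i(s):=\mu_i([\gamma_{ij}(s_j)]_{j\in\mathcal I_i})$ (argument zero outside $\mathcal I_i$). $\Gamma_\rho:=(\mathrm{id}+\rho)\circ\Gamma$. $\mathcal N^-_i(n)$: vertices $j$ with a directed path from $j$ to $i$ of length at most $n$ ($\mathcal N^-_i(0)=\{i\}$). For monotone $T$: NJI condition: $T(s)\ge s$ fails for all $s>0$; uniform NJI condition: for all $r,\varepsilon>0$ there are $n\in\mathbb N$, $\delta>0$ such that for all $s$, $i$ with $s_i\ge\varepsilon$, $\|s\|\le r$ there is $j\in\mathcal N^-_i(n)$ with $s_j\ge\delta$, $T_j(s)<s_j$; $\oplus$-MBI property: there is $\varphi\in\mathcal K_\infty$ with $s\le b\oplus T(s)\Rightarrow\|s\|\le\varphi(\|b\|)$ for all $s,b$; $\Sigma(T)$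 is the system $s^{n+1}=T(s^n)$, UGAS if $\|T^n(s)\|\le\beta(\|s\|,n)$ for some $\beta\in\mathcal{KL}$. A path of strict decay for $\Gamma$ is a map $\sigma:\mathbb R_+\to\ell^\infty_+(\mathcal I)$ such that: (i) for some $\rho\in\mathcal K_\infty$, $\Gamma_\rho(\sigma(r))\le\sigma(r)$ for all $r\ge0$; (ii) $\varphi_{\min}(r)\mathbf 1\le\sigma(r)\le\varphi_{\max}(r)\mathbf 1$ for some $\varphi_{\min},\varphi_{\max}\in\mathcal K_\infty$; (iii) each $\sigma_i\in\mathcal K_\infty$; (iv) for each compact $K\subset(0,\infty)$ there are $0<l\le L$ with $l|r_1-r_2|\le|\sigma_i^{-1}(r_1)-\sigma_i^{-1}(r_2)|\le L|r_1-r_2|$ for all $r_1,r_2\in K$, $i\in\mathcal I$. *)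

theory Defs
  imports "HOL-Analysis.Analysis"
begin

definition nonneg :: "('i \<Rightarrow> real) \<Rightarrow> bool" where
  "nonneg s \<longleftrightarrow> (\<forall>i. 0 \<le> s i)"

definition pos_vec :: "('i \<Rightarrow> real) \<Rightarrow> bool" where
  "pos_vec s \<longleftrightarrow> nonneg s \<and> s \<noteq> (\<lambda>_. 0)"

definition supn :: "('i::finite \<Rightarrow> real) \<Rightarrow> real" where
  "supn s = (MAX i. \<bar>s i\<bar>)"

definition restr :: "'i set \<Rightarrow> ('i \<Rightarrow> real) \<Rightarrow> ('i \<Rightarrow> real)" where
  "restr J s = (\<lambda>i. if i \<in> J then s i else 0)"

definition vmax :: "('i \<Rightarrow> real) \<Rightarrow> ('i \<Rightarrow> real) \<Rightarrow> ('i \<Rightarrow> real)" where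
  "vmax a b = (\<lambda>i. max (a i) (b i))"

definition class_K :: "(real \<Rightarrow> real) \<Rightarrow> bool" where
  "class_K g \<longleftrightarrow> continuous_on {0..} g \<and> strict_mono_on {0..} g \<and> g 0 = 0"

definition class_Kinf :: "(real \<Rightarrow> real) \<Rightarrow> bool" where
  "class_Kinf g \<longleftrightarrow> class_K g \<and> (\<forall>M. \<exists>r\<ge>0. M < g r)"

definition class_KL :: "(real \<Rightarrow> real \<Rightarrow> real) \<Rightarrow> bool" where
  "class_KL \<beta> \<longleftrightarrow> continuous_on ({0..} \<times> {0..}) (\<lambda>(r,t). \<beta> r t)
     \<and> (\<forall>t\<ge>0. class_K (\<lambda>r. \<beta> r t))
     \<and> (\<forall>r>0. continuous_on {0..} (\<beta> r) \<and>
              (\<forall>t1 t2. 0 \<le> t1 \<longrightarrow> t1 < t2 \<longrightarrow> \<beta> r t2 < \<beta> r t1) \<and>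
              (\<beta> r \<longlongrightarrow> 0) at_top)"

definition edges :: "('i \<Rightarrow> 'i set) \<Rightarrow> ('i \<times> 'i) set" where
  "edges Iset = {(j, i). j \<in> Iset i}"

definition in_nbhd :: "('i \<Rightarrow> 'i set) \<Rightarrow> 'i \<Rightarrow> nat \<Rightarrow> 'i set" where
  "in_nbhd Iset i n = {j. \<exists>k\<le>n. (j, i) \<in> (edges Iset) ^^ k}"

definition gain_operator ::
  "('i::finite \<Rightarrow> 'i set) \<Rightarrow> ('i \<Rightarrow> 'i \<Rightarrow> real \<Rightarrow> real) \<Rightarrow> ('i \<Rightarrow> ('i \<Rightarrow> real) \<Rightarrow> real) \<Rightarrow> bool" where
  "gain_operator Iset \<gamma> \<mu> \<longleftrightarrow>
     (\<forall>i. finite (Iset i) \<and> i \<notin> Iset i)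
   \<and> (\<forall>i. \<forall>j\<in>Iset i. class_Kinf (\<gamma> i j))
   \<comment> \<open>pointwise equicontinuity of the family (gamma_ij)\<close>
   \<and> (\<forall>r\<ge>0. \<forall>\<epsilon>>0. \<exists>\<delta>>0. \<forall>i. \<forall>j\<in>Iset i. \<forall>r'\<ge>0.
          \<bar>r - r'\<bar> \<le> \<delta> \<longrightarrow> \<bar>\<gamma> i j r - \<gamma> i j r'\<bar> \<le> \<epsilon>)
   \<comment> \<open>values in [0,infinity): finite by (M3) since the index set is finite\<close>
   \<and> (\<forall>i s. nonneg s \<longrightarrow> 0 \<le> \<mu> i s)
   \<comment> \<open>(M1)\<close>
   \<and> (\<exists>\<xi>. class_Kinf \<xi> \<and> (\<forall>i. \<mu> i (\<lambda>_. 0) = 0 \<and>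
          (\<forall>s. nonneg s \<longrightarrow> \<xi> (supn s) \<le> \<mu> i s)))
   \<comment> \<open>(M2)\<close>
   \<and> (\<forall>i s t. nonneg s \<longrightarrow> nonneg t \<longrightarrow> (\<forall>k. s k \<le> t k) \<longrightarrow> \<mu> i s \<le> \<mu> i t)
   \<comment> \<open>(M3): continuity on vectors vanishing off a finite set J\<close>
   \<and> (\<forall>i J s0. finite J \<longrightarrow> nonneg s0 \<longrightarrow> (\<forall>k. k \<notin> J \<longrightarrow> s0 k = 0) \<longrightarrow>
          (\<forall>\<epsilon>>0. \<exists>\<delta>>0. \<forall>s. nonneg s \<longrightarrow> (\<forall>k. k \<notin> J \<longrightarrow> s k = 0) \<longrightarrow>
             supn (\<lambda>k. s k - s0 k) \<le> \<delta> \<longrightarrow> \<bar>\<mu> i s - \<mu> i s0\<bar> \<le> \<epsilon>))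
   \<comment> \<open>(M4)\<close>
   \<and> (\<forall>A. (\<forall>s\<in>A. nonneg s) \<longrightarrow> (\<exists>C. \<forall>s\<in>A. supn s \<le> C) \<longrightarrow>
          (\<forall>\<epsilon>>0. \<exists>\<delta>>0. \<forall>s0\<in>A. \<forall>s. nonneg s \<longrightarrow> supn (\<lambda>k. s k - s0 k) \<le> \<delta> \<longrightarrow>
             (\<forall>i. \<bar>\<mu> i (restr (Iset i) s) - \<mu> i (restr (Iset i) s0)\<bar> \<le> \<epsilon>)))"

definition unif_cont_mu :: "('i::finite \<Rightarrow> ('i \<Rightarrow> real) \<Rightarrow> real) \<Rightarrow> bool" where
  "unif_cont_mu \<mu> \<longleftrightarrow> (\<forall>i. \<forall>\<epsilon>>0. \<exists>\<delta>>0. \<forall>s t. nonneg s \<longrightarrow> nonneg t \<longrightarrow>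
       supn (\<lambda>k. s k - t k) \<le> \<delta> \<longrightarrow> \<bar>\<mu> i s - \<mu> i t\<bar> \<le> \<epsilon>)"

definition Gam :: "('i \<Rightarrow> 'i set) \<Rightarrow> ('i \<Rightarrow> 'i \<Rightarrow> real \<Rightarrow> real) \<Rightarrow> ('i \<Rightarrow> ('i \<Rightarrow> real) \<Rightarrow> real)
                    \<Rightarrow> ('i \<Rightarrow> real) \<Rightarrow> ('i \<Rightarrow> real)" where
  "Gam Iset \<gamma> \<mu> s = (\<lambda>i. \<mu> i (\<lambda>j. if j \<in> Iset i then \<gamma> i j (s j) else 0))"

definition Gam_rho :: "(real \<Rightarrow> real) \<Rightarrow> ('i \<Rightarrow> 'i set) \<Rightarrow> ('i \<Rightarrow> 'i \<Rightarrow> real \<Rightarrow> real)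
                    \<Rightarrow> ('i \<Rightarrow> ('i \<Rightarrow> real) \<Rightarrow> real) \<Rightarrow> ('i \<Rightarrow> real) \<Rightarrow> ('i \<Rightarrow> real)" where
  "Gam_rho \<rho> Iset \<gamma> \<mu> s = (\<lambda>i. Gam Iset \<gamma> \<mu> s i + \<rho> (Gam Iset \<gamma> \<mu> s i))"

definition NJI :: "(('i \<Rightarrow> real) \<Rightarrow> ('i \<Rightarrow> real)) \<Rightarrow> bool" where
  "NJI T \<longleftrightarrow> (\<forall>s. pos_vec s \<longrightarrow> \<not> (\<forall>i. s i \<le> T s i))"

definition uniform_NJI :: "('i::finite \<Rightarrow> 'i set) \<Rightarrow> (('i \<Rightarrow> real) \<Rightarrow> ('i \<Rightarrow> real)) \<Rightarrow> bool" where
  "uniform_NJI Iset T \<longleftrightarrow> (\<forall>r>0. \<forall>\<epsilon>>0. \<exists>n::nat. \<exists>\<delta>>0. \<forall>s i.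
      nonneg s \<longrightarrow> \<epsilon> \<le> s i \<longrightarrow> supn s \<le> r \<longrightarrow>
      (\<exists>j\<in>in_nbhd Iset i n. \<delta> \<le> s j \<and> T s j < s j))"

definition oplus_MBI :: "(('i::finite \<Rightarrow> real) \<Rightarrow> ('i \<Rightarrow> real)) \<Rightarrow> bool" where
  "oplus_MBI T \<longleftrightarrow> (\<exists>\<phi>. class_Kinf \<phi> \<and> (\<forall>s b. nonneg s \<longrightarrow> nonneg b \<longrightarrow>
      (\<forall>i. s i \<le> vmax b (T s) i) \<longrightarrow> supn s \<le> \<phi> (supn b)))"

definition UGAS :: "(('i::finite \<Rightarrow> real) \<Rightarrow> ('i \<Rightarrow> real)) \<Rightarrow> bool" where
  "UGAS T \<longleftrightarrow> (\<exists>\<beta>. class_KL \<beta> \<and> (\<forall>s n. nonneg s \<longrightarrow> supn ((T ^^ n) s) \<le> \<beta> (supn s) (real n)))"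

definition path_strict_decay ::
  "('i::finite \<Rightarrow> 'i set) \<Rightarrow> ('i \<Rightarrow> 'i \<Rightarrow> real \<Rightarrow> real) \<Rightarrow> ('i \<Rightarrow> ('i \<Rightarrow> real) \<Rightarrow> real)
     \<Rightarrow> (real \<Rightarrow> 'i \<Rightarrow> real) \<Rightarrow> bool" where
  "path_strict_decay Iset \<gamma> \<mu> \<sigma> \<longleftrightarrow>
     (\<exists>\<rho>. class_Kinf \<rho> \<and> (\<forall>r\<ge>0. \<forall>i. Gam_rho \<rho> Iset \<gamma> \<mu> (\<sigma> r) i \<le> \<sigma> r i))
   \<and> (\<exists>\<phi>min \<phi>max. class_Kinf \<phi>min \<and> class_Kinf \<phi>max \<and>
        (\<forall>r\<ge>0. \<forall>i. \<phi>min r \<le> \<sigma> r i \<and> \<sigma> r i \<le> \<phi>max r))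
   \<and> (\<forall>i. class_Kinf (\<lambda>r. \<sigma> r i))
   \<and> (\<forall>K. compact K \<longrightarrow> K \<subseteq> {0<..} \<longrightarrow>
        (\<exists>l L. 0 < l \<and> l \<le> L \<and> (\<forall>r1\<in>K. \<forall>r2\<in>K. \<forall>i.
           l * \<bar>r1 - r2\<bar> \<le> \<bar>the_inv_into {0..} (\<lambda>r. \<sigma> r i) r1 - the_inv_into {0..} (\<lambda>r. \<sigma> r i) r2\<bar>
         \<and> \<bar>the_inv_into {0..} (\<lambda>r. \<sigma> r i) r1 - the_inv_into {0..} (\<lambda>r. \<sigma> r i) r2\<bar> \<le> L * \<bar>r1 - r2\<bar>)))"

end

theory Submission
  imports Defs
begin

lemma supn_ge: "\<bar>s i\<bar> \<le> supn s"
  unfolding supn_def by (rule Max_ge) auto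

lemma supn_ge': "s i \<le> supn s"
  using supn_ge[of s i] by linarith

lemma supn_nonneg: "0 \<le> supn s"
  using supn_ge[of s undefined] by linarith

lemma supn_attained: "\<exists>i. supn s = \<bar>s i\<bar>"
proof -
  have "supn s \<in> (\<lambda>i. \<bar>s i\<bar>) ` UNIV" unfolding supn_def by (rule Max_in) auto
  then show ?thesis by auto
qed

lemma supn_le_iff: "supn s \<le> c \<longleftrightarrow> (\<forall>i. \<bar>s i\<bar> \<le> c)"
proof
  assume "supn s \<le> c" then show "\<forall>i. \<bar>s i\<bar> \<le> c" using supn_ge[of s] order_trans by blast
next
  assume "\<forall>i. \<bar>s i\<bar> \<le> c" then show "supn s \<le> c" using supn_attained[of s] by auto
qed

lemma supn_less_iff: "supn s < c \<longleftrightarrow> (\<forall>i. \<bar>s i\<bar> < c)"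
proof
  assume "supn s < c" then show "\<forall>i. \<bar>s i\<bar> < c" using supn_ge[of s] order_le_less_trans by blast
next
  assume "\<forall>i. \<bar>s i\<bar> < c" then show "supn s < c" using supn_attained[of s] by auto
qed

lemma supn_const: "supn (\<lambda>_. c) = \<bar>c\<bar>"
  using supn_attained[of "\<lambda>_. c"] by auto

lemma supn_zero_iff: "supn s = 0 \<longleftrightarrow> s = (\<lambda>_. 0)"
proof
  assume a: "supn s = 0" show "s = (\<lambda>_. 0)"
  proof
    fix i show "s i = 0" using supn_ge[of s i] a by linarith
  qed
qed (simp add: supn_const)

lemma supn_mono: "nonneg s \<Longrightarrow> (\<forall>i. s i \<le> t i) \<Longrightarrow> supn s \<le> supn t"
proof -
  assume a: "nonneg s" "\<forall>i. s i \<le> t i"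
  have "\<bar>s i\<bar> \<le> supn t" for i
    using a supn_ge'[of t i] unfolding nonneg_def by (metis abs_of_nonneg order_trans)
  then show ?thesis by (simp add: supn_le_iff)
qed

lemma supn_diff: "\<bar>supn a - supn b\<bar> \<le> supn (\<lambda>i. a i - b i)"
proof -
  have 1: "supn a \<le> supn b + supn (\<lambda>i. a i - b i)" for a b :: "'a \<Rightarrow> real"
  proof -
    obtain i where "supn a = \<bar>a i\<bar>" using supn_attained by blast
    moreover have "\<bar>a i\<bar> \<le> \<bar>b i\<bar> + \<bar>a i - b i\<bar>" by linarith
    moreover note supn_ge[of b i] supn_ge[of "\<lambda>i. a i - b i" i]
    ultimately show ?thesis by simp
  qed
  have "supn (\<lambda>i. b i - a i) = supn (\<lambda>i. a i - b i)"
    unfolding supn_def by (simp add: abs_minus_commute)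
  with 1[of a b] 1[of b a] show ?thesis by linarith
qed

lemma pos_supn: "nonneg s \<Longrightarrow> s \<noteq> (\<lambda>_. 0) \<Longrightarrow> 0 < supn s"
  using supn_zero_iff supn_nonneg by (metis order_le_less)

lemma nonneg_zero[simp]: "nonneg (\<lambda>_. 0)" by (simp add: nonneg_def)

lemma classK_mono: "class_K g \<Longrightarrow> 0 \<le> x \<Longrightarrow> x \<le> y \<Longrightarrow> g x \<le> g y"
  unfolding class_K_def strict_mono_on_def by (metis atLeast_iff order_le_less order_trans)

lemma classK_strict: "class_K g \<Longrightarrow> 0 \<le> x \<Longrightarrow> x < y \<Longrightarrow> g x < g y"
  unfolding class_K_def strict_mono_on_def by auto

lemma classK_nonneg: "class_K g \<Longrightarrow> 0 \<le> x \<Longrightarrow> 0 \<le> g x"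
  using classK_mono[of g 0 x] by (simp add: class_K_def)

lemma classK_pos: "class_K g \<Longrightarrow> 0 < x \<Longrightarrow> 0 < g x"
  using classK_strict[of g 0 x] by (simp add: class_K_def)

lemma classK_zero: "class_K g \<Longrightarrow> g 0 = 0" by (simp add: class_K_def)

lemma classK_cont: "class_K g \<Longrightarrow> continuous_on {0..} g" by (simp add: class_K_def)

lemma classKinf_K: "class_Kinf g \<Longrightarrow> class_K g" by (simp add: class_Kinf_def)

lemma classKinf_unbdd: "class_Kinf g \<Longrightarrow> \<exists>r\<ge>0. M < g r" by (simp add: class_Kinf_def)

lemma classK_tendsto:
  assumes "class_K g" "x \<longlonglongrightarrow> l" "\<forall>m. 0 \<le> x m" "0 \<le> l"
  shows "(\<lambda>m. g (x m)) \<longlonglongrightarrow> g l"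
  using continuous_on_tendsto_compose[OF classK_cont[OF assms(1)] assms(2)] assms(3,4)
  by (auto simp: o_def)

definition vconv :: "(nat \<Rightarrow> 'i \<Rightarrow> real) \<Rightarrow> ('i \<Rightarrow> real) \<Rightarrow> bool" where
  "vconv x l \<longleftrightarrow> (\<forall>i. (\<lambda>m. x m i) \<longlonglongrightarrow> l i)"

lemma vconv_supn:
  fixes x :: "nat \<Rightarrow> 'i::finite \<Rightarrow> real"
  assumes "vconv x l"
  shows "(\<lambda>m. supn (\<lambda>i. x m i - l i)) \<longlonglongrightarrow> 0"
proof (rule tendstoI)
  fix e :: real assume e: "0 < e"
  have "\<forall>i. eventually (\<lambda>m. dist (x m i) (l i) < e) sequentially"
    using assms e unfolding vconv_def tendsto_iff by blast
  then have "eventually (\<lambda>m. \<forall>i. dist (x m i) (l i) < e) sequentially"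
    by (intro eventually_all_finite) (use \<open>\<forall>i. _\<close> in blast)
  then show "eventually (\<lambda>m. dist (supn (\<lambda>i. x m i - l i)) 0 < e) sequentially"
  proof (rule eventually_mono)
    fix m assume "\<forall>i. dist (x m i) (l i) < e"
    then have "supn (\<lambda>i. x m i - l i) < e" by (simp add: supn_less_iff dist_real_def)
    then show "dist (supn (\<lambda>i. x m i - l i)) 0 < e" using supn_nonneg[of "\<lambda>i. x m i - l i"] by (simp add: dist_real_def)
  qed
qed

lemma vconv_supn2:
  fixes x :: "nat \<Rightarrow> 'i::finite \<Rightarrow> real"
  assumes "vconv x l"
  shows "(\<lambda>m. supn (x m)) \<longlonglongrightarrow> supn l"
proof -
  have "(\<lambda>m. supn (x m) - supn l) \<longlonglongrightarrow> 0"
  proof (rule Lim_null_comparison)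
    show "eventually (\<lambda>m. norm (supn (x m) - supn l) \<le> supn (\<lambda>i. x m i - l i)) sequentially"
      by (intro always_eventually allI) (simp add: supn_diff)
  qed (rule vconv_supn[OF assms])
  then show ?thesis by (simp add: LIM_zero_iff)
qed

lemma vconv_subseq: "vconv x l \<Longrightarrow> strict_mono r \<Longrightarrow> vconv (x \<circ> r) l"
  unfolding vconv_def using LIMSEQ_subseq_LIMSEQ by (auto simp: o_def)

lemma vconv_le:
  "vconv x l \<Longrightarrow> vconv y l' \<Longrightarrow> (\<forall>m. x m i \<le> y m i) \<Longrightarrow> l i \<le> l' i"
  unfolding vconv_def by (meson LIMSEQ_le)

lemma vconv_le_const:
  "vconv x l \<Longrightarrow> (\<forall>m. x m i \<le> c) \<Longrightarrow> l i \<le> c"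
  unfolding vconv_def by (meson LIMSEQ_le_const2)

lemma vconv_ge_const:
  "vconv x l \<Longrightarrow> (\<forall>m. c \<le> x m i) \<Longrightarrow> c \<le> l i"
  unfolding vconv_def by (meson LIMSEQ_le_const)

lemma vconv_nonneg: "vconv x l \<Longrightarrow> (\<forall>m. nonneg (x m)) \<Longrightarrow> nonneg l"
  unfolding nonneg_def by (meson vconv_ge_const)

lemma vconv_const: "vconv (\<lambda>m. l) l"
  by (simp add: vconv_def)

lemma vconv_unique: "vconv x l \<Longrightarrow> vconv x l' \<Longrightarrow> l = l'"
  unfolding vconv_def by (intro ext) (meson LIMSEQ_unique)

lemma BW:
  fixes x :: "nat \<Rightarrow> 'i::finite \<Rightarrow> real"
  assumes "\<forall>m. supn (x m) \<le> B"
  shows "\<exists>r L. strict_mono r \<and> vconv (x \<circ> r) L"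
proof -
  define X where "X m = (vec_lambda (x m) :: real^'i)" for m
  have "norm (X m) \<le> real CARD('i) * B" for m
  proof -
    have "norm (X m) \<le> (\<Sum>i\<in>UNIV. \<bar>X m $ i\<bar>)" by (rule norm_le_l1_cart)
    also have "\<dots> \<le> (\<Sum>i\<in>(UNIV::'i set). B)"
      by (rule sum_mono) (use assms supn_ge in \<open>auto simp: X_def intro: order_trans\<close>)
    finally show ?thesis by simp
  qed
  then have "bounded (range X)" by (auto simp: bounded_iff)
  then obtain L r where r: "strict_mono r" and L: "(X \<circ> r) \<longlonglongrightarrow> L"
    using bounded_imp_convergent_subsequence by blast
  have "vconv (x \<circ> r) (\<lambda>i. L $ i)"
    unfolding vconv_def
  proof
    fix i
    have "(\<lambda>m. (X \<circ> r) m $ i) \<longlonglongrightarrow> L $ i" using L by (rule tendsto_vec_nth)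
    then show "(\<lambda>m. (x \<circ> r) m i) \<longlonglongrightarrow> L $ i" by (simp add: X_def o_def)
  qed
  with r show ?thesis by blast
qed

lemma vconv_incseq:
  fixes x :: "nat \<Rightarrow> 'i::finite \<Rightarrow> real"
  assumes "\<forall>m i. x m i \<le> x (Suc m) i" "\<forall>m i. x m i \<le> B"
  shows "\<exists>L. vconv x L"
proof -
  have "\<forall>i. \<exists>l. (\<lambda>m. x m i) \<longlonglongrightarrow> l"
  proof
    fix i
    have "incseq (\<lambda>m. x m i)" using assms(1) by (simp add: incseq_Suc_iff)
    moreover have "bdd_above (range (\<lambda>m. x m i))" by (intro bdd_aboveI2) (use assms(2) in auto)
    ultimately show "\<exists>l. (\<lambda>m. x m i) \<longlonglongrightarrow> l" using LIMSEQ_incseq_SUP by blast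
  qed
  then show ?thesis unfolding vconv_def by metis
qed

lemma vconv_decseq:
  fixes x :: "nat \<Rightarrow> 'i::finite \<Rightarrow> real"
  assumes "\<forall>m i. x (Suc m) i \<le> x m i" "\<forall>m i. B \<le> x m i"
  shows "\<exists>L. vconv x L"
proof -
  have "\<forall>i. \<exists>l. (\<lambda>m. x m i) \<longlonglongrightarrow> l"
  proof
    fix i
    have "decseq (\<lambda>m. x m i)" using assms(1) by (simp add: decseq_Suc_iff)
    moreover have "bdd_below (range (\<lambda>m. x m i))" by (intro bdd_belowI2) (use assms(2) in auto)
    ultimately show "\<exists>l. (\<lambda>m. x m i) \<longlonglongrightarrow> l" using LIMSEQ_decseq_INF by blast
  qed
  then show ?thesis unfolding vconv_def by metis
qed

locale gop =
  fixes Iset :: "'i::finite \<Rightarrow> 'i set" and \<gamma> :: "'i \<Rightarrow> 'i \<Rightarrow> real \<Rightarrow> real"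
    and \<mu> :: "'i \<Rightarrow> ('i \<Rightarrow> real) \<Rightarrow> real"
  assumes go: "gain_operator Iset \<gamma> \<mu>" and uc: "unif_cont_mu \<mu>"
begin

abbreviation G where "G \<equiv> Gam Iset \<gamma> \<mu>"
abbreviation GR where "GR \<rho> \<equiv> Gam_rho \<rho> Iset \<gamma> \<mu>"

lemma gK: "j \<in> Iset i \<Longrightarrow> class_Kinf (\<gamma> i j)"
  using go[unfolded gain_operator_def, THEN conjunct2, THEN conjunct1] by blast

lemma fin: "finite (Iset i)"
  using go[unfolded gain_operator_def, THEN conjunct1] by blast

lemma mu_nonneg: "nonneg s \<Longrightarrow> 0 \<le> \<mu> i s"
  using go[unfolded gain_operator_def, THEN conjunct2, THEN conjunct2, THEN conjunct2, THEN conjunct1] by blast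

lemma mu_zero: "\<mu> i (\<lambda>_. 0) = 0"
  using go[unfolded gain_operator_def, THEN conjunct2, THEN conjunct2, THEN conjunct2, THEN conjunct2, THEN conjunct1] by blast

lemma mu_mono: "nonneg s \<Longrightarrow> nonneg t \<Longrightarrow> \<forall>k. s k \<le> t k \<Longrightarrow> \<mu> i s \<le> \<mu> i t"
  using go[unfolded gain_operator_def, THEN conjunct2, THEN conjunct2, THEN conjunct2, THEN conjunct2, THEN conjunct2, THEN conjunct1] by blast

definition argv :: "'i \<Rightarrow> ('i \<Rightarrow> real) \<Rightarrow> 'i \<Rightarrow> real" where
  "argv i s = (\<lambda>j. if j \<in> Iset i then \<gamma> i j (s j) else 0)"

lemma G_def': "G s i = \<mu> i (argv i s)"
  by (simp add: Gam_def argv_def)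

lemma argv_nonneg: "nonneg s \<Longrightarrow> nonneg (argv i s)"
  unfolding nonneg_def argv_def using gK classKinf_K classK_nonneg by auto

lemma argv_mono: "nonneg s \<Longrightarrow> \<forall>j. s j \<le> t j \<Longrightarrow> argv i s j \<le> argv i t j"
  unfolding nonneg_def argv_def using gK classKinf_K classK_mono by auto

lemma G_nonneg: "nonneg s \<Longrightarrow> 0 \<le> G s i"
  by (simp add: G_def' argv_nonneg mu_nonneg)

lemma G_nonneg': "nonneg s \<Longrightarrow> nonneg (G s)"
  using G_nonneg nonneg_def by blast

lemma G_mono: "nonneg s \<Longrightarrow> \<forall>j. s j \<le> t j \<Longrightarrow> G s i \<le> G t i"
proof -
  assume a: "nonneg s" "\<forall>j. s j \<le> t j"
  then have "nonneg t" unfolding nonneg_def by (meson order_trans)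
  then show ?thesis unfolding G_def' using a
    by (intro mu_mono argv_nonneg) (auto intro: argv_mono)
qed

lemma argv_zero: "argv i (\<lambda>_. 0) = (\<lambda>_. 0)"
  unfolding argv_def using gK classKinf_K classK_zero by auto

lemma G_zero: "G (\<lambda>_. 0) i = 0"
  by (simp add: G_def' argv_zero mu_zero)

lemma G_local: "(\<forall>j\<in>Iset i. s j = t j) \<Longrightarrow> G s i = G t i"
proof -
  assume "\<forall>j\<in>Iset i. s j = t j"
  then have "argv i s = argv i t" unfolding argv_def by auto
  then show ?thesis by (simp add: G_def')
qed

lemma GR_eq: "GR \<rho> s i = G s i + \<rho> (G s i)"
  by (simp add: Gam_rho_def)

lemma GR_nonneg: "class_K \<rho> \<Longrightarrow> nonneg s \<Longrightarrow> 0 \<le> GR \<rho> s i"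
  using G_nonneg classK_nonneg by (simp add: GR_eq add_nonneg_nonneg)

lemma GR_nonneg': "class_K \<rho> \<Longrightarrow> nonneg s \<Longrightarrow> nonneg (GR \<rho> s)"
  using GR_nonneg nonneg_def by blast

lemma GR_mono: "class_K \<rho> \<Longrightarrow> nonneg s \<Longrightarrow> \<forall>j. s j \<le> t j \<Longrightarrow> GR \<rho> s i \<le> GR \<rho> t i"
proof -
  assume a: "class_K \<rho>" "nonneg s" "\<forall>j. s j \<le> t j"
  have 1: "G s i \<le> G t i" using G_mono a by blast
  have "\<rho> (G s i) \<le> \<rho> (G t i)" using classK_mono[OF a(1) G_nonneg[OF a(2)] 1] .
  with 1 show ?thesis unfolding GR_eq by linarith
qed

lemma GR_zero: "class_K \<rho> \<Longrightarrow> GR \<rho> (\<lambda>_. 0) i = 0"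
  by (simp add: GR_eq G_zero classK_zero)

lemma GR_local: "(\<forall>j\<in>Iset i. s j = t j) \<Longrightarrow> GR \<rho> s i = GR \<rho> t i"
  by (simp add: GR_eq G_local[of i s t])

lemma GR_le_rho: "(\<forall>x\<ge>0. \<rho>1 x \<le> \<rho>2 x) \<Longrightarrow> nonneg s \<Longrightarrow> GR \<rho>1 s i \<le> GR \<rho>2 s i"
  unfolding GR_eq using G_nonneg by auto

lemma G_le_GR: "class_K \<rho> \<Longrightarrow> nonneg s \<Longrightarrow> G s i \<le> GR \<rho> s i"
  unfolding GR_eq using G_nonneg classK_nonneg by auto

lemma mu_tendsto:
  assumes "vconv v w" "\<forall>m. nonneg (v m)" "nonneg w"
  shows "(\<lambda>m. \<mu> i (v m)) \<longlonglongrightarrow> \<mu> i w"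
proof (rule tendstoI)
  fix e :: real assume e: "0 < e"
  have e2: "0 < e / 2" using e by simp
  obtain d where d: "d > 0" and H: "\<forall>s t. nonneg s \<longrightarrow> nonneg t \<longrightarrow>
       supn (\<lambda>k. s k - t k) \<le> d \<longrightarrow> \<bar>\<mu> i s - \<mu> i t\<bar> \<le> e / 2"
    using uc e2 unfolding unif_cont_mu_def by blast
  have "eventually (\<lambda>m. dist (supn (\<lambda>k. v m k - w k)) 0 < d) sequentially"
    using vconv_supn[OF assms(1)] d unfolding tendsto_iff by blast
  then show "eventually (\<lambda>m. dist (\<mu> i (v m)) (\<mu> i w) < e) sequentially"
  proof (rule eventually_mono)
    fix m assume "dist (supn (\<lambda>k. v m k - w k)) 0 < d"
    then have "supn (\<lambda>k. v m k - w k) \<le> d" by (simp add: dist_real_def)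
    then have "\<bar>\<mu> i (v m) - \<mu> i w\<bar> \<le> e / 2" using H assms by blast
    then show "dist (\<mu> i (v m)) (\<mu> i w) < e" using e by (simp add: dist_real_def)
  qed
qed

lemma argv_tendsto:
  assumes "vconv x l" "\<forall>m. nonneg (x m)" "nonneg l"
  shows "vconv (\<lambda>m. argv i (x m)) (argv i l)"
  unfolding vconv_def
proof
  fix j
  show "(\<lambda>m. argv i (x m) j) \<longlonglongrightarrow> argv i l j"
  proof (cases "j \<in> Iset i")
    case True
    have "(\<lambda>m. \<gamma> i j (x m j)) \<longlonglongrightarrow> \<gamma> i j (l j)"
      using classK_tendsto[OF classKinf_K[OF gK[OF True]]] assms
      unfolding vconv_def nonneg_def by blast
    then show ?thesis using True by (simp add: argv_def)
  qed (simp add: argv_def)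
qed

lemma G_tendsto:
  assumes "vconv x l" "\<forall>m. nonneg (x m)" "nonneg l"
  shows "vconv (\<lambda>m. G (x m)) (G l)"
  unfolding vconv_def G_def'
  using mu_tendsto[OF argv_tendsto[OF assms]] assms argv_nonneg by blast

lemma GR_tendsto:
  assumes "class_K \<rho>" "vconv x l" "\<forall>m. nonneg (x m)" "nonneg l"
  shows "vconv (\<lambda>m. GR \<rho> (x m)) (GR \<rho> l)"
  unfolding vconv_def GR_eq
proof
  fix i
  have 1: "(\<lambda>m. G (x m) i) \<longlonglongrightarrow> G l i" using G_tendsto[OF assms(2-4)] unfolding vconv_def by blast
  have "(\<lambda>m. \<rho> (G (x m) i)) \<longlonglongrightarrow> \<rho> (G l i)"
    using classK_tendsto[OF assms(1) 1] G_nonneg assms by blast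
  with 1 show "(\<lambda>m. G (x m) i + \<rho> (G (x m) i)) \<longlonglongrightarrow> G l i + \<rho> (G l i)"
    by (intro tendsto_add)
qed

end

definition Sset :: "(('i \<Rightarrow> real) \<Rightarrow> 'i \<Rightarrow> real) \<Rightarrow> real \<Rightarrow> ('i \<Rightarrow> real) set" where
  "Sset T r = {s. nonneg s \<and> (\<forall>i. s i \<le> max r (T s i))}"

lemma Sset_mono: "r \<le> r' \<Longrightarrow> Sset T r \<subseteq> Sset T r'"
  unfolding Sset_def by (auto intro: order_trans)

context gop begin

lemma mu_bdd_pert_aux:
  fixes d :: real
  assumes d: "d > 0" and H: "\<forall>i s t. nonneg s \<longrightarrow> nonneg t \<longrightarrow>
       supn (\<lambda>k. s k - t k) \<le> d \<longrightarrow> \<bar>\<mu> i s - \<mu> i t\<bar> \<le> 1"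
  shows "\<forall>v w. nonneg v \<longrightarrow> nonneg w \<longrightarrow> supn (\<lambda>k. v k - w k) \<le> real N * d \<longrightarrow> \<bar>\<mu> i v - \<mu> i w\<bar> \<le> real N"
proof (induction N)
  case 0
  show ?case
  proof (intro allI impI)
    fix v w :: "'i \<Rightarrow> real" assume "supn (\<lambda>k. v k - w k) \<le> real 0 * d"
    then have "\<forall>k. \<bar>v k - w k\<bar> \<le> 0" by (simp add: supn_le_iff)
    then have "v = w" by (intro ext) (metis abs_le_zero_iff eq_iff_diff_eq_0)
    then show "\<bar>\<mu> i v - \<mu> i w\<bar> \<le> real 0" by simp
  qed
next
  case (Suc N)
  show ?case
  proof (intro allI impI)
    fix v w :: "'i \<Rightarrow> real"
    assume v: "nonneg v" and w: "nonneg w" and vw: "supn (\<lambda>k. v k - w k) \<le> real (Suc N) * d"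
    define t where "t = real N / real (Suc N)"
    have t01: "0 \<le> t" "t \<le> 1" by (auto simp: t_def)
    define z where "z k = v k + t * (w k - v k)" for k
    have z: "nonneg z"
    proof -
      have "0 \<le> v k + t * (w k - v k)" for k
      proof -
        have "v k + t * (w k - v k) = (1 - t) * v k + t * w k" by (simp add: algebra_simps)
        also have "\<dots> \<ge> 0" using v w t01 unfolding nonneg_def by (simp add: add_nonneg_nonneg)
        finally show ?thesis .
      qed
      then show ?thesis unfolding nonneg_def z_def by simp
    qed
    have vwk: "\<bar>v k - w k\<bar> \<le> real (Suc N) * d" for k
      using vw unfolding supn_le_iff by blast
    have "supn (\<lambda>k. v k - z k) \<le> real N * d"
    proof -
      have "\<bar>v k - z k\<bar> \<le> real N * d" for k
      proof -
        have "\<bar>v k - z k\<bar> = t * \<bar>v k - w k\<bar>" using t01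
          by (simp add: z_def abs_mult abs_minus_commute)
        also have "\<dots> \<le> t * (real (Suc N) * d)" using vwk[of k] t01 by (simp add: mult_left_mono)
        also have "\<dots> = real N * d" by (simp add: t_def)
        finally show ?thesis .
      qed
      then show ?thesis by (simp add: supn_le_iff)
    qed
    then have 1: "\<bar>\<mu> i v - \<mu> i z\<bar> \<le> real N" using Suc.IH v z by blast
    have "supn (\<lambda>k. z k - w k) \<le> d"
    proof -
      have "\<bar>z k - w k\<bar> \<le> d" for k
      proof -
        have "z k - w k = (1 - t) * (v k - w k)" by (simp add: z_def algebra_simps)
        then have "\<bar>z k - w k\<bar> = (1 - t) * \<bar>v k - w k\<bar>" using t01 by (simp add: abs_mult)
        also have "\<dots> \<le> (1 - t) * (real (Suc N) * d)" using vwk[of k] t01 by (simp add: mult_left_mono)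
        also have "\<dots> = d" by (simp add: t_def field_simps)
        finally show ?thesis .
      qed
      then show ?thesis by (simp add: supn_le_iff)
    qed
    then have 2: "\<bar>\<mu> i z - \<mu> i w\<bar> \<le> 1" using H z w by blast
    from 1 2 show "\<bar>\<mu> i v - \<mu> i w\<bar> \<le> real (Suc N)" by simp
  qed
qed

lemma mu_bdd_pert:
  "\<exists>C\<ge>0. \<forall>i v w. nonneg v \<longrightarrow> nonneg w \<longrightarrow> supn (\<lambda>k. v k - w k) \<le> X \<longrightarrow> \<bar>\<mu> i v - \<mu> i w\<bar> \<le> C"
proof -
  have "\<forall>i. \<exists>d>0. \<forall>s t. nonneg s \<longrightarrow> nonneg t \<longrightarrow>
       supn (\<lambda>k. s k - t k) \<le> d \<longrightarrow> \<bar>\<mu> i s - \<mu> i t\<bar> \<le> 1"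
    using uc unfolding unif_cont_mu_def by (meson zero_less_one)
  then obtain df where df: "\<forall>i. df i > 0 \<and> (\<forall>s t. nonneg s \<longrightarrow> nonneg t \<longrightarrow>
       supn (\<lambda>k. s k - t k) \<le> df i \<longrightarrow> \<bar>\<mu> i s - \<mu> i t\<bar> \<le> 1)"
    by metis
  define d where "d = Min (range df)"
  have d: "d > 0" unfolding d_def using df by (subst Min_gr_iff) auto
  have dle: "d \<le> df i" for i unfolding d_def by (rule Min_le) auto
  have H: "\<forall>i s t. nonneg s \<longrightarrow> nonneg t \<longrightarrow>
       supn (\<lambda>k. s k - t k) \<le> d \<longrightarrow> \<bar>\<mu> i s - \<mu> i t\<bar> \<le> 1"
    using df dle by (meson order_trans)
  define N where "N = nat \<lceil>X / d\<rceil>"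
  have "X \<le> real N * d"
  proof -
    have "X / d \<le> real N" unfolding N_def by linarith
    then show ?thesis using d by (simp add: divide_le_eq)
  qed
  then show ?thesis using mu_bdd_pert_aux[OF d H, of N]
    by (intro exI[of _ "real N"]) (auto intro: order_trans)
qed

end

locale gopr = gop Iset \<gamma> \<mu> for Iset :: "'i::finite \<Rightarrow> 'i set" and \<gamma> \<mu> +
  fixes \<rho> :: "real \<Rightarrow> real"
  assumes rK: "class_Kinf \<rho>" and nji: "NJI (GR \<rho>)"
begin

definition rho1 :: "real \<Rightarrow> real" where "rho1 x = \<rho> (x / 2) / 2"

lemma rho1_Kinf: "class_Kinf rho1"
proof -
  have K: "class_K \<rho>" using rK classKinf_K by blast
  have "continuous_on {0..} rho1"
  proof -
    have "continuous_on {0..} (\<lambda>x::real. x / 2)" by (intro continuous_intros) simp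
    moreover have "(\<lambda>x::real. x / 2) ` {0..} \<subseteq> {0..}" by auto
    ultimately have "continuous_on {0..} (\<rho> \<circ> (\<lambda>x. x / 2))"
      using continuous_on_compose continuous_on_subset classK_cont[OF K] by blast
    then have "continuous_on {0..} (\<lambda>x. (1/2) * (\<rho> \<circ> (\<lambda>x. x / 2)) x)"
      by (rule continuous_on_mult_left)
    then show ?thesis unfolding rho1_def o_def by simp
  qed
  moreover have "strict_mono_on {0..} rho1"
    unfolding strict_mono_on_def rho1_def using classK_strict[OF K] by auto
  moreover have "rho1 0 = 0" using classK_zero[OF K] by (simp add: rho1_def)
  moreover have "\<exists>r\<ge>0. M < rho1 r" for M
  proof -
    obtain r where "r \<ge> 0" "2 * M < \<rho> r" using classKinf_unbdd[OF rK] by blast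
    then show ?thesis by (intro exI[of _ "2 * r"]) (auto simp: rho1_def)
  qed
  ultimately show ?thesis unfolding class_Kinf_def class_K_def by blast
qed

lemma rK': "class_K \<rho>" using rK classKinf_K by blast
lemma rho1K: "class_K rho1" using rho1_Kinf classKinf_K by blast

lemma rho1_le: "x \<ge> 0 \<Longrightarrow> rho1 x \<le> \<rho> x"
proof -
  assume x: "x \<ge> 0"
  have "\<rho> (x / 2) \<le> \<rho> x" using classK_mono[OF rK'] x by simp
  moreover have "0 \<le> \<rho> (x / 2)" using classK_nonneg[OF rK'] x by simp
  ultimately show ?thesis unfolding rho1_def by simp
qed

abbreviation T1 where "T1 \<equiv> GR rho1"

lemma Lf_ex:
  assumes C: "C \<ge> 0"
  shows "\<exists>L\<ge>0. \<forall>g\<ge>0. \<forall>x. L < x \<longrightarrow> x \<le> g + rho1 g \<longrightarrow> C \<le> g \<and> x \<le> (g - C) + \<rho> (g - C)"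
proof -
  obtain r0 where r0: "r0 \<ge> 0" "2 * C < \<rho> r0" using classKinf_unbdd[OF rK] by blast
  define G0 where "G0 = max (2 * C) (2 * r0)"
  have G0: "G0 \<ge> 0" using C by (simp add: G0_def)
  define L where "L = G0 + rho1 G0"
  have L: "L \<ge> 0" unfolding L_def using G0 classK_nonneg[OF rho1K] by (simp add: add_nonneg_nonneg)
  have "\<forall>g\<ge>0. \<forall>x. L < x \<longrightarrow> x \<le> g + rho1 g \<longrightarrow> C \<le> g \<and> x \<le> (g - C) + \<rho> (g - C)"
  proof (intro allI impI)
    fix g x :: real assume g: "g \<ge> 0" and x: "L < x" "x \<le> g + rho1 g"
    have gG: "G0 < g"
    proof (rule ccontr)
      assume "\<not> G0 < g"
      then have "g \<le> G0" by simp
      then have "rho1 g \<le> rho1 G0" using classK_mono[OF rho1K g] by simp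
      with x \<open>g \<le> G0\<close> show False unfolding L_def by linarith
    qed
    have g2: "r0 \<le> g / 2" "2 * C \<le> g" using gG unfolding G0_def by auto
    have m1: "\<rho> (g / 2) \<le> \<rho> (g - C)" using classK_mono[OF rK', of "g/2" "g - C"] g g2 by simp
    have m2: "\<rho> r0 \<le> \<rho> (g / 2)" using classK_mono[OF rK' r0(1) g2(1)] .
    have "x \<le> g + \<rho> (g / 2) / 2" using x unfolding rho1_def by simp
    also have "\<dots> \<le> (g - C) + \<rho> (g - C)" using m1 m2 r0 by linarith
    finally show "C \<le> g \<and> x \<le> (g - C) + \<rho> (g - C)" using g2 C by linarith
  qed
  with L show ?thesis by blast
qed

lemma S_bounded:
  assumes r: "r \<ge> 0"
  shows "\<exists>R. \<forall>s\<in>Sset T1 r. supn s \<le> R"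
proof -
  define g where "g a = (\<Sum>i\<in>UNIV. \<Sum>j\<in>Iset i. \<gamma> i j a)" for a
  have g: "\<gamma> i j a \<le> g a" if "j \<in> Iset i" "a \<ge> 0" for i j a
  proof -
    have nn: "0 \<le> \<gamma> i' j' a" if "j' \<in> Iset i'" for i' j'
      using classK_nonneg[OF classKinf_K[OF gK[OF that]]] \<open>a \<ge> 0\<close> .
    have "\<gamma> i j a \<le> (\<Sum>j\<in>Iset i. \<gamma> i j a)"
      using that nn by (intro member_le_sum) (auto simp: fin)
    also have "\<dots> \<le> g a" unfolding g_def using nn
      by (intro member_le_sum) (auto intro: sum_nonneg)
    finally show ?thesis .
  qed
  define Cf where "Cf X = (SOME C. C \<ge> 0 \<and> (\<forall>i v w. nonneg v \<longrightarrow> nonneg w \<longrightarrow>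
      supn (\<lambda>k. v k - w k) \<le> X \<longrightarrow> \<bar>\<mu> i v - \<mu> i w\<bar> \<le> C))" for X
  have Cf: "Cf X \<ge> 0 \<and> (\<forall>i v w. nonneg v \<longrightarrow> nonneg w \<longrightarrow>
      supn (\<lambda>k. v k - w k) \<le> X \<longrightarrow> \<bar>\<mu> i v - \<mu> i w\<bar> \<le> Cf X)" for X
    unfolding Cf_def using mu_bdd_pert[of X] by (rule someI_ex)
  define Lf where "Lf C = (SOME L. L \<ge> 0 \<and> (\<forall>g\<ge>0. \<forall>x. L < x \<longrightarrow> x \<le> g + rho1 g \<longrightarrow>
      C \<le> g \<and> x \<le> (g - C) + \<rho> (g - C)))" for C
  have Lf: "Lf C \<ge> 0 \<and> (\<forall>g\<ge>0. \<forall>x. Lf C < x \<longrightarrow> x \<le> g + rho1 g \<longrightarrow>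
      C \<le> g \<and> x \<le> (g - C) + \<rho> (g - C))" if "C \<ge> 0" for C
    unfolding Lf_def using Lf_ex[OF that] by (rule someI_ex)
  define a where "a = rec_nat r (\<lambda>k ak. ak + Lf (Cf (g ak)))"
  have a0: "a 0 = r" and aS: "a (Suc k) = a k + Lf (Cf (g (a k)))" for k
    by (simp_all add: a_def)
  have a_nonneg: "a k \<ge> 0" for k
    by (induction k) (use r Lf Cf in \<open>auto simp: a0 aS\<close>)
  have a_step: "a k \<le> a (Suc k)" for k using Lf Cf by (simp add: aS)
  have a_mono: "k \<le> m \<Longrightarrow> a k \<le> a m" for k m
    using a_step by (rule lift_Suc_mono_le)
  define n where "n = CARD('i)"
  show ?thesis
  proof (intro exI ballI)
    fix s assume sS: "s \<in> Sset T1 r"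
    then have s_nn: "nonneg s" and s_le: "\<forall>i. s i \<le> max r (T1 s i)" by (auto simp: Sset_def)
    show "supn s \<le> a (Suc n)"
    proof (rule ccontr)
      assume big: "\<not> supn s \<le> a (Suc n)"
      obtain j0 where j0: "supn s = \<bar>s j0\<bar>" using supn_attained by blast
      have sj0: "s j0 > a (Suc n)" using big j0 s_nn unfolding nonneg_def by auto
      have "\<exists>k\<le>n. \<forall>j. \<not> (a k < s j \<and> s j \<le> a (Suc k))"
      proof (rule ccontr)
        assume "\<not> ?thesis"
        then have "\<forall>k. \<exists>j. k \<le> n \<longrightarrow> a k < s j \<and> s j \<le> a (Suc k)" by auto
        then obtain f where f: "\<forall>k. k \<le> n \<longrightarrow> a k < s (f k) \<and> s (f k) \<le> a (Suc k)" by metis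
        have "inj_on f {..n}"
        proof (rule inj_onI)
          fix k1 k2 assume k: "k1 \<in> {..n}" "k2 \<in> {..n}" "f k1 = f k2"
          show "k1 = k2"
          proof (rule ccontr)
            assume "k1 \<noteq> k2"
            then consider "k1 < k2" | "k2 < k1" by linarith
            then show False
            proof cases
              case 1
              then have "a (Suc k1) \<le> a k2" using a_mono by simp
              moreover have "s (f k1) \<le> a (Suc k1)" "a k2 < s (f k2)" using f k by auto
              ultimately show False using k(3) by simp
            next
              case 2
              then have "a (Suc k2) \<le> a k1" using a_mono by simp
              moreover have "s (f k2) \<le> a (Suc k2)" "a k1 < s (f k1)" using f k by auto
              ultimately show False using k(3) by simp
            qed
          qed
        qed
        then have "card {..n} \<le> card (UNIV :: 'i set)"
          using card_inj_on_le[where f=f and A="{..n}" and B=UNIV] by auto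
        then show False by (simp add: n_def)
      qed
      then obtain k where kn: "k \<le> n" and gap: "\<forall>j. \<not> (a k < s j \<and> s j \<le> a (Suc k))" by blast
      define J where "J = {j. a (Suc k) < s j}"
      define u where "u = restr J s"
      have notJ: "s j \<le> a k" if "j \<notin> J" for j
      proof -
        have "\<not> a (Suc k) < s j" using that unfolding J_def by simp
        moreover have "\<not> (a k < s j \<and> s j \<le> a (Suc k))" using gap by blast
        ultimately show ?thesis by linarith
      qed
      have j0J: "j0 \<in> J" using sj0 a_mono[of "Suc k" "Suc n"] kn unfolding J_def by simp
      have u_nn: "nonneg u" using s_nn unfolding u_def restr_def nonneg_def by auto
      have u_pos: "pos_vec u"
      proof -
        have "u j0 = s j0" using j0J by (simp add: u_def restr_def)
        moreover have "s j0 > 0" using sj0 a_nonneg[of "Suc n"] by linarith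
        ultimately have "u \<noteq> (\<lambda>_. 0)" by (metis less_irrefl)
        then show ?thesis using u_nn by (simp add: pos_vec_def)
      qed
      have "\<forall>i. u i \<le> GR \<rho> u i"
      proof
        fix i
        show "u i \<le> GR \<rho> u i"
        proof (cases "i \<in> J")
          case False
          then show ?thesis using GR_nonneg[OF rK' u_nn] by (simp add: u_def restr_def)
        next
          case True
          define C where "C = Cf (g (a k))"
          have C0: "C \<ge> 0" using Cf by (simp add: C_def)
          have si: "a (Suc k) < s i" using True by (simp add: J_def)
          have rle: "r \<le> a (Suc k)" using a_mono[of 0 "Suc k"] by (simp add: a0)
          have s1: "s i \<le> G s i + rho1 (G s i)"
          proof -
            have "s i \<le> max r (T1 s i)" using s_le by blast
            moreover have "\<not> s i \<le> r" using si rle by linarith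
            ultimately show ?thesis by (simp add: GR_eq)
          qed
          have LC: "Lf C < s i" using si a_nonneg[of k] by (simp add: aS C_def)
          have key: "C \<le> G s i \<and> s i \<le> (G s i - C) + \<rho> (G s i - C)"
            using Lf[OF C0] LC s1 G_nonneg[OF s_nn] by blast
          have "supn (\<lambda>j. argv i s j - argv i u j) \<le> g (a k)"
          proof -
            have "\<bar>argv i s j - argv i u j\<bar> \<le> g (a k)" for j
            proof (cases "j \<in> Iset i \<and> j \<notin> J")
              case True
              then have "argv i s j - argv i u j = \<gamma> i j (s j)"
                using classK_zero[OF classKinf_K[OF gK]] by (simp add: argv_def u_def restr_def)
              moreover have "0 \<le> \<gamma> i j (s j)"
                using True s_nn classK_nonneg[OF classKinf_K[OF gK]] unfolding nonneg_def by blast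
              moreover have "\<gamma> i j (s j) \<le> \<gamma> i j (a k)"
                using True s_nn notJ classK_mono[OF classKinf_K[OF gK]] unfolding nonneg_def by blast
              moreover have "\<gamma> i j (a k) \<le> g (a k)" using True g a_nonneg by blast
              ultimately show ?thesis by linarith
            next
              case False
              then have "argv i s j = argv i u j" by (auto simp: argv_def u_def restr_def)
              then show ?thesis using g a_nonneg
                by (simp add: g_def sum_nonneg classK_nonneg[OF classKinf_K[OF gK]])
            qed
            then show ?thesis by (simp add: supn_le_iff)
          qed
          then have "\<bar>\<mu> i (argv i s) - \<mu> i (argv i u)\<bar> \<le> C"
            using Cf argv_nonneg s_nn u_nn unfolding C_def by blast
          then have Gu: "G s i - C \<le> G u i" by (simp add: G_def')
          have "\<rho> (G s i - C) \<le> \<rho> (G u i)" using classK_mono[OF rK', OF _ Gu] key by linarith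
          then have "s i \<le> G u i + \<rho> (G u i)" using key Gu by linarith
          then show ?thesis using True by (simp add: GR_eq u_def restr_def)
        qed
      qed
      then show False using nji u_pos unfolding NJI_def by blast
    qed
  qed
qed

end

context gopr begin

lemma rho1_le': "nonneg s \<Longrightarrow> T1 s i \<le> GR \<rho> s i"
  by (rule GR_le_rho) (use rho1_le in auto)

lemma T1_nji: "nonneg s \<Longrightarrow> \<forall>i. s i \<le> T1 s i \<Longrightarrow> s = (\<lambda>_. 0)"
proof (rule ccontr)
  assume a: "nonneg s" "\<forall>i. s i \<le> T1 s i" "s \<noteq> (\<lambda>_. 0)"
  then have "pos_vec s" by (simp add: pos_vec_def)
  moreover have "\<forall>i. s i \<le> GR \<rho> s i" using a rho1_le' order_trans by blast
  ultimately show False using nji unfolding NJI_def by blast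
qed

lemma S0: "s \<in> Sset T1 0 \<Longrightarrow> s = (\<lambda>_. 0)"
proof -
  assume "s \<in> Sset T1 0"
  then have a: "nonneg s" "\<forall>i. s i \<le> max 0 (T1 s i)" by (auto simp: Sset_def)
  have "\<forall>i. s i \<le> T1 s i" using a GR_nonneg[OF rho1K a(1)] by (metis max.absorb2)
  then show ?thesis using T1_nji a(1) by blast
qed

lemma small_scale:
  assumes e: "e > 0"
  shows "\<exists>x>0. \<forall>s\<in>Sset T1 x. supn s \<le> e"
proof (rule ccontr)
  assume "\<not> ?thesis"
  then have H: "\<forall>x>0. \<exists>s\<in>Sset T1 x. e < supn s" by (auto simp: not_le)
  have "\<forall>m::nat. \<exists>s. s \<in> Sset T1 (1 / (real m + 1)) \<and> e < supn s"
  proof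
    fix m :: nat
    have "1 / (real m + 1) > 0" by simp
    then show "\<exists>s. s \<in> Sset T1 (1 / (real m + 1)) \<and> e < supn s" using H by blast
  qed
  then obtain sq where sq: "\<forall>m. sq m \<in> Sset T1 (1 / (real m + 1)) \<and> e < supn (sq m)" by metis
  obtain R where R: "\<forall>s\<in>Sset T1 1. supn s \<le> R" using S_bounded[of 1] by auto
  have "sq m \<in> Sset T1 1" for m
    using sq Sset_mono[of "1 / (real m + 1)" 1 T1] by (auto simp: field_simps)
  then have "\<forall>m. supn (sq m) \<le> R" using R by blast
  then obtain r L where r: "strict_mono r" and L: "vconv (sq \<circ> r) L" using BW by blast
  have nn: "\<forall>m. nonneg ((sq \<circ> r) m)" using sq by (auto simp: Sset_def)
  then have Lnn: "nonneg L" using vconv_nonneg L by blast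
  have "(\<lambda>m. supn ((sq \<circ> r) m)) \<longlonglongrightarrow> supn L" using vconv_supn2[OF L] .
  then have "e \<le> supn L" using sq by (intro LIMSEQ_le_const) (auto intro: less_imp_le)
  then have L0: "L \<noteq> (\<lambda>_. 0)" using e supn_const by (metis abs_zero less_le_not_le)
  have "\<forall>i. L i \<le> T1 L i"
  proof
    fix i
    have T: "(\<lambda>m. T1 ((sq \<circ> r) m) i) \<longlonglongrightarrow> T1 L i"
      using GR_tendsto[OF rho1K L nn Lnn] unfolding vconv_def by blast
    have "(\<lambda>m. 1 / (real (r m) + 1)) \<longlonglongrightarrow> 0"
    proof -
      have "(\<lambda>m. 1 / (real m + 1)) \<longlonglongrightarrow> (0::real)" 
        using LIMSEQ_inverse_real_of_nat by (simp add: inverse_eq_divide add.commute)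
      then show ?thesis using LIMSEQ_subseq_LIMSEQ[OF _ r] by (simp add: o_def)
    qed
    then have M: "(\<lambda>m. max (1 / (real (r m) + 1)) (T1 ((sq \<circ> r) m) i)) \<longlonglongrightarrow> max 0 (T1 L i)"
      using T by (intro tendsto_max)
    have "\<forall>m. (sq \<circ> r) m i \<le> max (1 / (real (r m) + 1)) (T1 ((sq \<circ> r) m) i)"
      using sq by (auto simp: Sset_def)
    moreover have A: "(\<lambda>m. (sq \<circ> r) m i) \<longlonglongrightarrow> L i" using L unfolding vconv_def by blast
    ultimately have "L i \<le> max 0 (T1 L i)"
      using LIMSEQ_le[OF A M] by auto
    then show "L i \<le> T1 L i" using GR_nonneg[OF rho1K Lnn, of i] by linarith
  qed
  then show False using T1_nji Lnn L0 by blast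
qed

end

context gopr begin

definition Eset :: "real \<Rightarrow> real set" where
  "Eset r = {x. 0 \<le> x \<and> x \<le> r \<and> (\<forall>s\<in>Sset T1 x. supn s \<le> r / 2)}"

definition eta :: "real \<Rightarrow> real" where "eta r = Sup (Eset r)"

lemma E0: "r \<ge> 0 \<Longrightarrow> 0 \<in> Eset r"
proof -
  assume r: "r \<ge> 0"
  have "\<forall>s\<in>Sset T1 0. supn s \<le> r / 2"
  proof
    fix s assume "s \<in> Sset T1 0"
    then have "s = (\<lambda>_. 0)" by (rule S0)
    then show "supn s \<le> r / 2" using r by (simp add: supn_const)
  qed
  then show ?thesis unfolding Eset_def using r by simp
qed

lemma E_bdd: "bdd_above (Eset r)"
  unfolding Eset_def by (intro bdd_aboveI[of _ r]) auto

lemma eta_le: "r \<ge> 0 \<Longrightarrow> eta r \<le> r"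
  unfolding eta_def using E0 by (intro cSup_least) (auto simp: Eset_def)

lemma eta_ge: "r \<ge> 0 \<Longrightarrow> x \<in> Eset r \<Longrightarrow> x \<le> eta r"
  unfolding eta_def by (rule cSup_upper[OF _ E_bdd])

lemma eta_nonneg: "r \<ge> 0 \<Longrightarrow> 0 \<le> eta r"
  using eta_ge E0 by blast

lemma eta_mono: "0 \<le> r \<Longrightarrow> r \<le> r' \<Longrightarrow> eta r \<le> eta r'"
proof -
  assume r: "0 \<le> r" "r \<le> r'"
  have "Eset r \<subseteq> Eset r'" unfolding Eset_def using r by (auto intro: order_trans)
  then show ?thesis unfolding eta_def using E0[OF r(1)] E_bdd by (intro cSup_subset_mono) auto
qed

lemma eta_pos: "r > 0 \<Longrightarrow> eta r > 0"
proof -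
  assume r: "r > 0"
  obtain x where x: "x > 0" "\<forall>s\<in>Sset T1 x. supn s \<le> r / 2" using small_scale[of "r/2"] r by auto
  have "min x r \<in> Eset r" unfolding Eset_def using x r Sset_mono[of "min x r" x T1] by auto
  then have "min x r \<le> eta r" using eta_ge r by simp
  then show ?thesis using x r by linarith
qed

lemma eta_unbdd: "\<exists>r\<ge>0. M \<le> eta r"
proof -
  define x where "x = max M 0"
  obtain R where R: "\<forall>s\<in>Sset T1 x. supn s \<le> R" using S_bounded[of x] by (auto simp: x_def)
  define r where "r = max x (2 * R)"
  have "x \<in> Eset r" unfolding Eset_def r_def using R x_def by auto
  then have "x \<le> eta r" using eta_ge[of r x] by (simp add: r_def x_def)
  then show ?thesis by (intro exI[of _ r]) (auto simp: x_def r_def)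
qed

lemma eta_key: "0 \<le> r \<Longrightarrow> 0 \<le> y \<Longrightarrow> y < eta r \<Longrightarrow> s \<in> Sset T1 y \<Longrightarrow> supn s \<le> r / 2"
proof -
  assume a: "0 \<le> r" "0 \<le> y" "y < eta r" "s \<in> Sset T1 y"
  have "Eset r \<noteq> {}" using E0[OF a(1)] by blast
  then obtain x where x: "x \<in> Eset r" "y < x" using a(3) less_cSup_iff[OF _ E_bdd] unfolding eta_def by blast
  then have "s \<in> Sset T1 x" using Sset_mono[of y x T1] a by auto
  then show ?thesis using x unfolding Eset_def by auto
qed

definition Fset :: "real \<Rightarrow> real set" where
  "Fset r = {eta t + (r - t) | t. 0 \<le> t \<and> t \<le> r}"

definition kap :: "real \<Rightarrow> real" where "kap r = Inf (Fset r) / 2"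

lemma F_ne: "r \<ge> 0 \<Longrightarrow> Fset r \<noteq> {}"
  unfolding Fset_def by auto

lemma F_bdd: "bdd_below (Fset r)"
  unfolding Fset_def by (intro bdd_belowI[of _ 0]) (auto intro: add_nonneg_nonneg eta_nonneg)

lemma F_ge: "0 \<le> t \<Longrightarrow> t \<le> r \<Longrightarrow> Inf (Fset r) \<le> eta t + (r - t)"
  unfolding Fset_def by (rule cInf_lower) (use F_bdd[unfolded Fset_def] in auto)

lemma F_nonneg: "r \<ge> 0 \<Longrightarrow> 0 \<le> Inf (Fset r)"
  by (rule cInf_greatest[OF F_ne]) (auto simp: Fset_def intro: add_nonneg_nonneg eta_nonneg)

lemma kap_nonneg: "r \<ge> 0 \<Longrightarrow> 0 \<le> kap r"
  using F_nonneg by (simp add: kap_def)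

lemma kap_le_eta: "r \<ge> 0 \<Longrightarrow> kap r \<le> eta r / 2"
  using F_ge[of r r] by (simp add: kap_def)

lemma kap_mono: "0 \<le> r1 \<Longrightarrow> r1 \<le> r2 \<Longrightarrow> kap r1 \<le> kap r2"
proof -
  assume r: "0 \<le> r1" "r1 \<le> r2"
  have "Inf (Fset r1) \<le> Inf (Fset r2)"
  proof (rule cInf_greatest[OF F_ne])
    show "0 \<le> r2" using r by simp
    fix e assume "e \<in> Fset r2"
    then obtain t where t: "0 \<le> t" "t \<le> r2" "e = eta t + (r2 - t)" unfolding Fset_def by auto
    show "Inf (Fset r1) \<le> e"
    proof (cases "t \<le> r1")
      case True
      then show ?thesis using F_ge[OF t(1) True] t r by linarith
    next
      case False
      then have "eta r1 \<le> eta t" using eta_mono r by simp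
      then show ?thesis using F_ge[of r1 r1] r t False by simp
    qed
  qed
  then show ?thesis by (simp add: kap_def)
qed

lemma kap_lip1: "0 \<le> r1 \<Longrightarrow> r1 \<le> r2 \<Longrightarrow> kap r2 \<le> kap r1 + (r2 - r1)"
proof -
  assume r: "0 \<le> r1" "r1 \<le> r2"
  have "Inf (Fset r2) - (r2 - r1) \<le> Inf (Fset r1)"
  proof (rule cInf_greatest[OF F_ne])
    show "0 \<le> r1" using r by simp
    fix e assume "e \<in> Fset r1"
    then obtain t where t: "0 \<le> t" "t \<le> r1" "e = eta t + (r1 - t)" unfolding Fset_def by auto
    have "Inf (Fset r2) \<le> eta t + (r2 - t)" using F_ge[of t r2] t r by simp
    then show "Inf (Fset r2) - (r2 - r1) \<le> e" using t by simp
  qed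
  then show ?thesis unfolding kap_def using r by simp
qed

lemma kap_lip: "0 \<le> a \<Longrightarrow> 0 \<le> b \<Longrightarrow> \<bar>kap a - kap b\<bar> \<le> \<bar>a - b\<bar>"
proof -
  assume ab: "0 \<le> a" "0 \<le> b"
  show ?thesis
  proof (cases "a \<le> b")
    case True
    then show ?thesis using kap_mono[OF ab(1) True] kap_lip1[OF ab(1) True] by linarith
  next
    case False
    then have "b \<le> a" by simp
    then show ?thesis using kap_mono[OF ab(2)] kap_lip1[OF ab(2)] by fastforce
  qed
qed

lemma kap_pos: "r > 0 \<Longrightarrow> kap r > 0"
proof -
  assume r: "r > 0"
  have "min (r / 2) (eta (r / 2)) \<le> Inf (Fset r)"
  proof (rule cInf_greatest[OF F_ne])
    show "0 \<le> r" using r by simp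
    fix e assume "e \<in> Fset r"
    then obtain t where t: "0 \<le> t" "t \<le> r" "e = eta t + (r - t)" unfolding Fset_def by auto
    show "min (r / 2) (eta (r / 2)) \<le> e"
    proof (cases "t \<le> r / 2")
      case True
      then show ?thesis using t eta_nonneg[OF t(1)] by simp
    next
      case False
      then have "eta (r / 2) \<le> eta t" using eta_mono r by simp
      then show ?thesis using t by simp
    qed
  qed
  moreover have "0 < min (r / 2) (eta (r / 2))" using r eta_pos[of "r/2"] by simp
  ultimately have "0 < Inf (Fset r)" by linarith
  then show ?thesis by (simp add: kap_def)
qed

lemma kap_unbdd: "\<exists>r\<ge>0. M \<le> kap r"
proof -
  obtain r1 where r1: "r1 \<ge> 0" "2 * M \<le> eta r1" using eta_unbdd by blast
  define r where "r = max (2 * r1) (4 * M)"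
  have r: "r \<ge> 0" using r1 by (simp add: r_def)
  have "min (r / 2) (eta (r / 2)) \<le> Inf (Fset r)"
  proof (rule cInf_greatest[OF F_ne[OF r]])
    fix e assume "e \<in> Fset r"
    then obtain t where t: "0 \<le> t" "t \<le> r" "e = eta t + (r - t)" unfolding Fset_def by auto
    show "min (r / 2) (eta (r / 2)) \<le> e"
    proof (cases "t \<le> r / 2")
      case True
      then show ?thesis using t eta_nonneg[OF t(1)] by simp
    next
      case False
      then have "eta (r / 2) \<le> eta t" using eta_mono r by simp
      then show ?thesis using t by simp
    qed
  qed
  moreover have "eta r1 \<le> eta (r / 2)" using eta_mono[OF r1(1)] by (simp add: r_def)
  ultimately have "2 * M \<le> Inf (Fset r)" using r1 by (simp add: r_def)
  then show ?thesis using r by (intro exI[of _ r]) (simp add: kap_def)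
qed

lemma kap_key: "r > 0 \<Longrightarrow> s \<in> Sset T1 (kap r) \<Longrightarrow> supn s \<le> r / 2"
proof -
  assume r: "r > 0" and s: "s \<in> Sset T1 (kap r)"
  have "kap r < eta r" using kap_le_eta[of r] eta_pos[OF r] r by simp
  moreover have "0 \<le> kap r" using kap_nonneg r by simp
  ultimately show ?thesis using eta_key[of r "kap r" s] s r by simp
qed

end

context gopr begin

definition Gk :: "('i \<Rightarrow> real) \<Rightarrow> 'i \<Rightarrow> real" where
  "Gk x = (\<lambda>i. max (max (T1 x i) (x i / 2)) (kap (supn x)))"

lemma Gk_ge1: "T1 x i \<le> Gk x i" by (simp add: Gk_def)
lemma Gk_ge2: "x i / 2 \<le> Gk x i" by (simp add: Gk_def)
lemma Gk_ge3: "kap (supn x) \<le> Gk x i" by (simp add: Gk_def)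

lemma Gk_nonneg: "nonneg (Gk x)"
  unfolding nonneg_def using Gk_ge3 kap_nonneg[OF supn_nonneg] order_trans by blast

lemma Gk_mono: "nonneg x \<Longrightarrow> \<forall>j. x j \<le> y j \<Longrightarrow> Gk x i \<le> Gk y i"
proof -
  assume a: "nonneg x" "\<forall>j. x j \<le> y j"
  have 1: "T1 x i \<le> T1 y i" using GR_mono[OF rho1K a] .
  have 2: "x i / 2 \<le> y i / 2" using a by simp
  have 3: "kap (supn x) \<le> kap (supn y)" using kap_mono[OF supn_nonneg supn_mono[OF a]] .
  show ?thesis unfolding Gk_def by (intro max.mono 1 2 3)
qed

lemma Gk_tendsto:
  assumes "vconv x l" "\<forall>m. nonneg (x m)" "nonneg l"
  shows "vconv (\<lambda>m. Gk (x m)) (Gk l)"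
  unfolding vconv_def Gk_def
proof
  fix i
  have 1: "(\<lambda>m. T1 (x m) i) \<longlonglongrightarrow> T1 l i" using GR_tendsto[OF rho1K assms] unfolding vconv_def by blast
  have 2: "(\<lambda>m. x m i / 2) \<longlonglongrightarrow> l i / 2" using assms(1) unfolding vconv_def by (intro tendsto_divide) auto
  have 3: "(\<lambda>m. kap (supn (x m))) \<longlonglongrightarrow> kap (supn l)"
  proof -
    have s: "(\<lambda>m. supn (x m)) \<longlonglongrightarrow> supn l" using vconv_supn2[OF assms(1)] .
    then have "(\<lambda>m. supn (x m) - supn l) \<longlonglongrightarrow> 0" by (simp add: LIM_zero)
    then have "(\<lambda>m. \<bar>supn (x m) - supn l\<bar>) \<longlonglongrightarrow> 0" by (simp add: tendsto_rabs_zero)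
    then have "(\<lambda>m. kap (supn (x m)) - kap (supn l)) \<longlonglongrightarrow> 0"
    proof (rule Lim_null_comparison[rotated])
      show "\<forall>\<^sub>F m in sequentially. norm (kap (supn (x m)) - kap (supn l)) \<le> \<bar>supn (x m) - supn l\<bar>"
        by (intro always_eventually allI) (simp add: kap_lip supn_nonneg)
    qed
    then show ?thesis by (simp add: LIM_zero_iff)
  qed
  show "(\<lambda>m. max (max (T1 (x m) i) (x m i / 2)) (kap (supn (x m)))) \<longlonglongrightarrow>
        max (max (T1 l i) (l i / 2)) (kap (supn l))"
    by (intro tendsto_max 1 2 3)
qed

lemma NF: "nonneg w \<Longrightarrow> \<forall>i. w i \<le> Gk w i \<Longrightarrow> w = (\<lambda>_. 0)"
proof (rule ccontr)
  assume a: "nonneg w" "\<forall>i. w i \<le> Gk w i" "w \<noteq> (\<lambda>_. 0)"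
  define r where "r = supn w"
  have r: "r > 0" using pos_supn a by (simp add: r_def)
  have "w \<in> Sset T1 (kap r)"
    unfolding Sset_def
  proof (intro CollectI conjI allI)
    show "nonneg w" by fact
    fix i
    show "w i \<le> max (kap r) (T1 w i)"
    proof (cases "w i \<le> 0")
      case True
      then show ?thesis using kap_nonneg[of r] r by auto
    next
      case False
      then have "w i / 2 < w i" by simp
      moreover have "w i \<le> max (max (T1 w i) (w i / 2)) (kap r)" using a(2) by (simp add: Gk_def r_def)
      ultimately show ?thesis by (auto simp: max_def split: if_splits)
    qed
  qed
  then have "supn w \<le> r / 2" using kap_key r by blast
  then show False using r by (simp add: r_def)
qed

definition DG :: "('i \<Rightarrow> real) set" where
  "DG = {x. nonneg x \<and> (\<forall>i. Gk x i \<le> x i)}"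

lemma DG_Gk: "x \<in> DG \<Longrightarrow> Gk x \<in> DG"
  unfolding DG_def using Gk_nonneg Gk_mono by blast

lemma DG_pow: "x \<in> DG \<Longrightarrow> (Gk ^^ m) x \<in> DG"
  by (induction m) (auto intro: DG_Gk)

lemma DG_nonneg: "x \<in> DG \<Longrightarrow> nonneg x" by (simp add: DG_def)

lemma pow_dec: "x \<in> DG \<Longrightarrow> (Gk ^^ Suc m) x i \<le> (Gk ^^ m) x i"
  using DG_pow[of x m] unfolding DG_def by simp

lemma supn_Gk: "nonneg x \<Longrightarrow> supn x / 2 \<le> supn (Gk x)"
proof -
  assume x: "nonneg x"
  obtain j where j: "supn x = \<bar>x j\<bar>" using supn_attained by blast
  then have "supn x = x j" using x by (simp add: nonneg_def)
  then show ?thesis using Gk_ge2[of x j] supn_ge'[of "Gk x" j] by linarith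
qed

lemma supn_pow: "x \<in> DG \<Longrightarrow> supn x / 2 ^ m \<le> supn ((Gk ^^ m) x)"
proof (induction m)
  case 0 then show ?case by simp
next
  case (Suc m)
  have "supn x / 2 ^ Suc m = (supn x / 2 ^ m) / 2" by simp
  also have "\<dots> \<le> supn ((Gk ^^ m) x) / 2" using Suc by (simp add: divide_right_mono)
  also have "\<dots> \<le> supn ((Gk ^^ Suc m) x)" using supn_Gk[OF DG_nonneg[OF DG_pow[OF Suc.prems]]] by simp
  finally show ?case .
qed

lemma Gk_pow_tendsto:
  assumes "vconv x l" "\<forall>m. nonneg (x m)" "nonneg l"
  shows "vconv (\<lambda>j. (Gk ^^ M) (x j)) ((Gk ^^ M) l)"
proof (induction M)
  case 0 then show ?case using assms by simp
next
  case (Suc M)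
  have nn: "\<forall>j. nonneg ((Gk ^^ M) (x j))" "nonneg ((Gk ^^ M) l)"
    by (cases M; simp add: Gk_nonneg assms)+
  show ?case using Gk_tendsto[OF Suc nn] by simp
qed

lemma iter_zero:
  assumes x: "x \<in> DG"
  shows "vconv (\<lambda>m. (Gk ^^ m) x) (\<lambda>_. 0)"
proof -
  obtain L where L: "vconv (\<lambda>m. (Gk ^^ m) x) L"
    using vconv_decseq[of "\<lambda>m. (Gk ^^ m) x" 0] pow_dec[OF x] DG_pow[OF x]
    unfolding DG_def nonneg_def by blast
  have nn: "\<forall>m. nonneg ((Gk ^^ m) x)" using DG_pow[OF x] by (simp add: DG_def)
  then have Lnn: "nonneg L" using vconv_nonneg L by blast
  have "vconv (\<lambda>m. Gk ((Gk ^^ m) x)) (Gk L)" using Gk_tendsto[OF L nn Lnn] .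
  moreover have "vconv (\<lambda>m. Gk ((Gk ^^ m) x)) L"
  proof -
    have "(\<lambda>m. (Gk ^^ Suc m) x i) \<longlonglongrightarrow> L i" for i
      using L unfolding vconv_def by (intro LIMSEQ_Suc) blast
    then show ?thesis by (simp add: vconv_def)
  qed
  ultimately have "Gk L = L" using vconv_unique by blast
  then have "L = (\<lambda>_. 0)" using NF[OF Lnn] by simp
  then show ?thesis using L by simp
qed

lemma Kleene:
  assumes r: "r > 0"
  shows "\<exists>X\<in>DG. r \<le> supn X"
proof -
  define w where "w = rec_nat (\<lambda>_. r) (\<lambda>m wm. (\<lambda>i. max r (T1 wm i)))"
  have w0: "w 0 = (\<lambda>_. r)" and wS: "w (Suc m) = (\<lambda>i. max r (T1 (w m) i))" for m
    by (simp_all add: w_def)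
  have wnn: "nonneg (w m)" for m
    by (cases m) (use r in \<open>auto simp: w0 wS nonneg_def\<close>)
  have winc: "w m i \<le> w (Suc m) i" for m i
  proof (induction m arbitrary: i)
    case 0 then show ?case by (simp add: w0 wS)
  next
    case (Suc m)
    have "T1 (w m) i \<le> T1 (w (Suc m)) i" using GR_mono[OF rho1K wnn] Suc by blast
    then have "max r (T1 (w m) i) \<le> max r (T1 (w (Suc m)) i)" by (rule max.mono[OF order_refl])
    moreover have "w (Suc m) i = max r (T1 (w m) i)" "w (Suc (Suc m)) i = max r (T1 (w (Suc m)) i)"
      by (simp_all only: wS)
    ultimately show ?case by simp
  qed
  have wS': "w m \<in> Sset T1 r" for m
  proof (cases m)
    case 0 then show ?thesis using wnn[of 0] by (simp add: Sset_def w0)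
  next
    case (Suc k)
    have "T1 (w k) i \<le> T1 (w m) i" for i using GR_mono[OF rho1K wnn] winc Suc by blast
    then have "max r (T1 (w k) i) \<le> max r (T1 (w m) i)" for i by (rule max.mono[OF order_refl])
    moreover have "w m i = max r (T1 (w k) i)" for i using Suc by (simp only: wS)
    ultimately show ?thesis using wnn by (simp add: Sset_def)
  qed
  obtain R where R: "\<forall>s\<in>Sset T1 r. supn s \<le> R" using S_bounded[of r] r by auto
  have "w m i \<le> R" for m i using R wS' supn_ge'[of "w m" i] by (meson order_trans)
  then obtain X where X: "vconv w X" using vconv_incseq[of w R] winc by blast
  have Xnn: "nonneg X" using vconv_nonneg[OF X] wnn by blast
  have eq: "X i = max r (T1 X i)" for i
  proof -
    have "(\<lambda>m. w (Suc m) i) \<longlonglongrightarrow> X i" using X unfolding vconv_def by (auto intro: LIMSEQ_Suc)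
    moreover have "(\<lambda>m. w (Suc m) i) \<longlonglongrightarrow> max r (T1 X i)"
      unfolding wS using GR_tendsto[OF rho1K X _ Xnn] wnn unfolding vconv_def
      by (intro tendsto_max tendsto_const) auto
    ultimately show ?thesis using LIMSEQ_unique by blast
  qed
  have Xr: "r \<le> X i" for i using eq[of i] by simp
  have T1X: "T1 X i \<le> X i" for i using eq[of i] by simp
  have XS: "X \<in> Sset T1 r" using Xnn eq by (simp add: Sset_def)
  have rs: "r \<le> supn X" using Xr supn_ge'[of X] order_trans by blast
  have "eta (supn X) \<le> r"
    unfolding eta_def
  proof (rule cSup_least)
    show "Eset (supn X) \<noteq> {}" using E0[OF supn_nonneg] by blast
    fix x assume x: "x \<in> Eset (supn X)"
    show "x \<le> r"
    proof (rule ccontr)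
      assume "\<not> x \<le> r"
      then have "X \<in> Sset T1 x" using XS Sset_mono[of r x T1] by auto
      then have "supn X \<le> supn X / 2" using x unfolding Eset_def by blast
      then show False using rs r by linarith
    qed
  qed
  then have "kap (supn X) \<le> r / 2" using kap_le_eta[OF supn_nonneg, of X] by linarith
  then have "Gk X i \<le> X i" for i using T1X[of i] Xr[of i] r Xnn
    unfolding Gk_def nonneg_def by (simp add: max_def)
  then have "X \<in> DG" using Xnn by (simp add: DG_def)
  with rs show ?thesis by blast
qed

end

context gopr begin

definition Rs :: "nat \<Rightarrow> ('i \<Rightarrow> real) set" where
  "Rs m = (Gk ^^ m) ` DG"

lemma Rs_Suc: "Rs (Suc m) \<subseteq> Rs m"
proof
  fix x assume "x \<in> Rs (Suc m)"
  then obtain z where z: "z \<in> DG" "x = (Gk ^^ Suc m) z" by (auto simp: Rs_def)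
  then have "x = (Gk ^^ m) (Gk z)" by (simp add: funpow_Suc_right del: funpow.simps)
  then show "x \<in> Rs m" using DG_Gk[OF z(1)] by (auto simp: Rs_def)
qed

lemma Rs_anti: "m \<le> m' \<Longrightarrow> Rs m' \<subseteq> Rs m"
  by (rule lift_Suc_antimono_le[of Rs, OF Rs_Suc])

lemma Rs_DG: "Rs m \<subseteq> DG"
  unfolding Rs_def using DG_pow by blast

lemma RC:
  assumes l: "vconv x l" and xR: "\<forall>j. x j \<in> Rs M" and B: "\<forall>j. supn (x j) \<le> B"
  shows "l \<in> Rs M"
proof -
  have "\<forall>j. \<exists>z. z \<in> DG \<and> x j = (Gk ^^ M) z" using xR by (auto simp: Rs_def)
  then obtain z where z: "\<forall>j. z j \<in> DG \<and> x j = (Gk ^^ M) (z j)" by metis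
  have "supn (z j) \<le> 2 ^ M * B" for j
  proof -
    have "supn (z j) / 2 ^ M \<le> supn (x j)" using supn_pow z by metis
    then show ?thesis using B by (simp add: divide_le_eq mult.commute order_trans)
  qed
  then obtain r zs where r: "strict_mono r" and zs: "vconv (z \<circ> r) zs" using BW by blast
  have znn: "\<forall>j. nonneg ((z \<circ> r) j)" using z DG_nonneg by auto
  have zsnn: "nonneg zs" using vconv_nonneg[OF zs znn] .
  have "vconv (\<lambda>j. Gk ((z \<circ> r) j)) (Gk zs)" using Gk_tendsto[OF zs znn zsnn] .
  then have "Gk zs i \<le> zs i" for i
    using vconv_le[OF _ zs, of "\<lambda>j. Gk ((z \<circ> r) j)" "Gk zs" i] z by (auto simp: DG_def)
  then have zsDG: "zs \<in> DG" using zsnn by (simp add: DG_def)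
  have "vconv (\<lambda>j. (Gk ^^ M) ((z \<circ> r) j)) ((Gk ^^ M) zs)" using Gk_pow_tendsto[OF zs znn zsnn] .
  moreover have "vconv (\<lambda>j. (Gk ^^ M) ((z \<circ> r) j)) l"
  proof -
    have "vconv (x \<circ> r) l" using vconv_subseq[OF l r] .
    moreover have "(x \<circ> r) = (\<lambda>j. (Gk ^^ M) ((z \<circ> r) j))" using z by auto
    ultimately show ?thesis by simp
  qed
  ultimately have "l = (Gk ^^ M) zs" using vconv_unique by blast
  then show ?thesis using zsDG by (simp add: Rs_def)
qed

lemma RC_tail:
  assumes l: "vconv (xs \<circ> r) l" and r: "strict_mono r" and xR: "\<forall>m. xs m \<in> Rs m"
    and B: "\<forall>m. supn (xs m) \<le> B"
  shows "l \<in> Rs M"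
proof -
  define ys where "ys j = xs (r (j + M))" for j
  have "vconv ys l" using l unfolding vconv_def ys_def
    by (auto intro: LIMSEQ_ignore_initial_segment[where k=M, simplified])
  moreover have "ys j \<in> Rs M" for j
  proof -
    have "j + M \<le> r (j + M)" using seq_suble[OF r] by blast
    then have "M \<le> r (j + M)" by simp
    then show ?thesis using xR Rs_anti unfolding ys_def by blast
  qed
  ultimately show ?thesis using RC B unfolding ys_def by blast
qed

lemma nonzero_Rinf: "\<exists>x. (\<forall>m. x \<in> Rs m) \<and> 1 \<le> supn x"
proof -
  have "\<exists>x. x \<in> Rs m \<and> 1 < supn x \<and> supn x \<le> 2" for m
  proof -
    obtain X where X: "X \<in> DG" "2 ^ (m + 2) \<le> supn X" using Kleene[of "2 ^ (m + 2)"] by auto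
    have "(\<lambda>j. supn ((Gk ^^ j) X)) \<longlonglongrightarrow> supn (\<lambda>_::'i. 0::real)"
      using vconv_supn2[OF iter_zero[OF X(1)]] .
    then have "(\<lambda>j. supn ((Gk ^^ j) X)) \<longlonglongrightarrow> 0" by (simp add: supn_const)
    then have "eventually (\<lambda>j. supn ((Gk ^^ j) X) < 2) sequentially"
      by (rule order_tendstoD) simp
    then obtain j0 where j0: "supn ((Gk ^^ j0) X) \<le> 2"
      by (meson eventually_sequentially less_imp_le order_refl)
    define P where "P j \<longleftrightarrow> supn ((Gk ^^ j) X) \<le> 2" for j
    define js where "js = (LEAST j. P j)"
    have Pjs: "P js" unfolding js_def using j0 P_def by (meson LeastI)
    have small: "\<not> P j" if "j \<le> m" for j
    proof -
      have "(2::real) ^ (m + 2) / 2 ^ j \<le> supn X / 2 ^ j"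
        using X(2) by (intro divide_right_mono) auto
      then have "(2::real) ^ (m + 2) / 2 ^ j \<le> supn ((Gk ^^ j) X)"
        using supn_pow[OF X(1), of j] by linarith
      moreover have "(2::real) ^ (m + 2) / 2 ^ j = 2 ^ (m + 2 - j)"
        using that by (simp add: power_diff)
      moreover have "(4::real) \<le> 2 ^ (m + 2 - j)"
      proof -
        have "(2::real) ^ 2 \<le> 2 ^ (m + 2 - j)" using that by (intro power_increasing) auto
        then show ?thesis by simp
      qed
      ultimately show ?thesis unfolding P_def by linarith
    qed
    have "m < js" using small Pjs by (meson not_le)
    then obtain j' where j': "js = Suc j'" by (cases js) auto
    have "\<not> P j'" using j' unfolding js_def by (metis lessI not_less_Least)
    then have "2 < supn ((Gk ^^ j') X)" unfolding P_def by simp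
    moreover have "supn ((Gk ^^ j') X) / 2 \<le> supn ((Gk ^^ js) X)"
      using supn_Gk[OF DG_nonneg[OF DG_pow[OF X(1)]], of j'] j' by simp
    ultimately have "1 < supn ((Gk ^^ js) X)" by linarith
    moreover have "(Gk ^^ js) X \<in> Rs m"
      using Rs_anti[of m js] \<open>m < js\<close> X(1) by (auto simp: Rs_def)
    ultimately show ?thesis using Pjs P_def by blast
  qed
  then obtain xs where xs: "\<forall>m. xs m \<in> Rs m \<and> 1 < supn (xs m) \<and> supn (xs m) \<le> 2" by metis
  then obtain r x where r: "strict_mono r" and x: "vconv (xs \<circ> r) x" using BW[of xs 2] by blast
  have "(\<lambda>j. supn ((xs \<circ> r) j)) \<longlonglongrightarrow> supn x" using vconv_supn2[OF x] .
  then have "1 \<le> supn x" using xs by (intro LIMSEQ_le_const) (auto intro: less_imp_le)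
  moreover have "\<forall>M. x \<in> Rs M" using RC_tail[OF x r] xs by blast
  ultimately show ?thesis by blast
qed

lemma step:
  assumes x: "\<forall>m. x \<in> Rs m"
  shows "\<exists>y. (\<forall>m. y \<in> Rs m) \<and> Gk y = x"
proof -
  have "\<exists>y. y \<in> Rs m \<and> Gk y = x \<and> supn y \<le> 2 * supn x" for m
  proof -
    obtain z where z: "z \<in> DG" "x = (Gk ^^ Suc m) z" using x[rule_format, of "Suc m"] by (auto simp: Rs_def)
    define y where "y = (Gk ^^ m) z"
    have "y \<in> Rs m" using z by (simp add: Rs_def y_def)
    moreover have "Gk y = x" using z by (simp add: y_def)
    moreover have "supn y \<le> 2 * supn x"
      using supn_Gk[OF DG_nonneg[OF DG_pow[OF z(1)]], of m] \<open>Gk y = x\<close> by (simp add: y_def)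
    ultimately show ?thesis by blast
  qed
  then obtain ys where ys: "\<forall>m. ys m \<in> Rs m \<and> Gk (ys m) = x \<and> supn (ys m) \<le> 2 * supn x" by metis
  then obtain r y where r: "strict_mono r" and y: "vconv (ys \<circ> r) y" using BW[of ys "2 * supn x"] by blast
  have yR: "\<forall>M. y \<in> Rs M" using RC_tail[OF y r] ys by blast
  have nn: "\<forall>j. nonneg ((ys \<circ> r) j)" using ys Rs_DG DG_nonneg by auto
  have "vconv (\<lambda>j. Gk ((ys \<circ> r) j)) (Gk y)" using Gk_tendsto[OF y nn vconv_nonneg[OF y nn]] .
  moreover have "(\<lambda>j. Gk ((ys \<circ> r) j)) = (\<lambda>j. x)" using ys by auto
  ultimately have "Gk y = x" using vconv_const vconv_unique by metis
  with yR show ?thesis by blast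
qed

end

context gopr begin

lemma chain_exists:
  "\<exists>c :: int \<Rightarrow> 'i \<Rightarrow> real. (\<forall>k i. 0 < c k i) \<and> (\<forall>k i. c k i \<le> c (k + 1) i) \<and>
     (\<forall>k. nonneg (c k)) \<and> (\<forall>k i. T1 (c (k + 1)) i \<le> c k i) \<and>
     (\<forall>e>0. \<exists>K. \<forall>k\<le>K. \<forall>i. c k i \<le> e) \<and> (\<forall>B. \<exists>K. \<forall>k\<ge>K. \<forall>i. B \<le> c k i)"
proof -
  define RI where "RI x \<longleftrightarrow> (\<forall>m. x \<in> Rs m)" for x
  obtain x0 where x0: "RI x0" "1 \<le> supn x0" using nonzero_Rinf unfolding RI_def by blast
  have "\<forall>x. \<exists>y. RI x \<longrightarrow> RI y \<and> Gk y = x" using step unfolding RI_def by blast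
  then obtain pre where pre: "\<forall>x. RI x \<longrightarrow> RI (pre x) \<and> Gk (pre x) = x" by metis
  define d where "d k = (pre ^^ k) x0" for k
  have dRI: "RI (d k)" for k by (induction k) (use x0 pre in \<open>auto simp: d_def\<close>)
  have dG: "Gk (d (Suc k)) = d k" for k using pre dRI by (simp add: d_def)
  have RI_DG: "RI x \<Longrightarrow> x \<in> DG" for x using Rs_DG unfolding RI_def by blast
  have dDG: "d k \<in> DG" for k using RI_DG dRI by blast
  have dinc: "d k i \<le> d (Suc k) i" for k i
  proof -
    have "Gk (d (Suc k)) i \<le> d (Suc k) i" using dDG[of "Suc k"] unfolding DG_def by blast
    then show ?thesis using dG[of k] by simp
  qed
  have d0le: "d 0 i \<le> d k i" for k i
    by (induction k) (auto intro: order_trans dinc)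
  have dsup: "1 \<le> supn (d k)" for k
  proof -
    have "supn (d 0) \<le> supn (d k)" using supn_mono[OF DG_nonneg[OF dDG]] d0le by blast
    then show ?thesis using x0 by (simp add: d_def)
  qed
  define e where "e m = (Gk ^^ m) x0" for m
  have x0DG: "x0 \<in> DG" using RI_DG x0 by blast
  have eDG: "e m \<in> DG" for m using DG_pow[OF x0DG] by (simp add: e_def)
  have eS: "e (Suc m) = Gk (e m)" for m by (simp add: e_def)
  have e0: "e 0 = x0" by (simp add: e_def)
  have esup: "0 < supn (e m)" for m
  proof -
    have "supn x0 / 2 ^ m \<le> supn (e m)" using supn_pow[OF x0DG] by (simp add: e_def)
    moreover have "0 < supn x0 / 2 ^ m" using x0 by simp
    ultimately show ?thesis by linarith
  qed
  define c where "c k = (if 0 \<le> k then d (nat k) else e (nat (- k)))" for k :: int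
  have cG: "c k = Gk (c (k + 1))" for k
  proof (cases "0 \<le> k")
    case True
    then have "nat (k + 1) = Suc (nat k)" by simp
    then show ?thesis using True dG by (simp add: c_def)
  next
    case False
    then have nk: "nat (- k) = Suc (nat (- (k + 1)))" by simp
    have "c (k + 1) = e (nat (- (k + 1)))"
    proof (cases "k = -1")
      case True then show ?thesis by (simp add: c_def e0 d_def)
    next
      case False
      then show ?thesis using \<open>\<not> 0 \<le> k\<close> by (simp add: c_def)
    qed
    then show ?thesis using False nk eS by (simp add: c_def)
  qed
  have cDG: "c k \<in> DG" for k using dDG eDG by (simp add: c_def)
  have csup: "0 < supn (c k)" for k
  proof (cases "0 \<le> k")
    case True
    then show ?thesis using dsup[of "nat k"] by (simp add: c_def)
  next
    case False
    then show ?thesis using esup[of "nat (- k)"] by (simp add: c_def)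
  qed
  have P1: "\<forall>k i. 0 < c k i"
  proof (intro allI)
    fix k i
    have "kap (supn (c (k + 1))) \<le> Gk (c (k + 1)) i" by (rule Gk_ge3)
    then have "kap (supn (c (k + 1))) \<le> c k i" using cG[of k] by simp
    moreover have "0 < kap (supn (c (k + 1)))" using kap_pos csup by blast
    ultimately show "0 < c k i" by linarith
  qed
  have P2: "\<forall>k i. c k i \<le> c (k + 1) i"
  proof (intro allI)
    fix k i
    have "Gk (c (k + 1)) i \<le> c (k + 1) i" using cDG[of "k + 1"] unfolding DG_def by blast
    then show "c k i \<le> c (k + 1) i" using cG[of k] by simp
  qed
  have P3: "\<forall>k. nonneg (c k)" using cDG DG_nonneg by blast
  have P4: "\<forall>k i. T1 (c (k + 1)) i \<le> c k i"
  proof (intro allI)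
    fix k i
    have "T1 (c (k + 1)) i \<le> Gk (c (k + 1)) i" by (rule Gk_ge1)
    then show "T1 (c (k + 1)) i \<le> c k i" using cG[of k] by simp
  qed
  have P5: "\<forall>e>0. \<exists>K. \<forall>k\<le>K. \<forall>i. c k i \<le> e"
  proof (intro allI impI)
    fix ep :: real assume ep: "0 < ep"
    have "(\<lambda>m. supn (e m)) \<longlonglongrightarrow> supn (\<lambda>_::'i. 0::real)"
      using vconv_supn2[OF iter_zero[OF x0DG]] by (simp add: e_def)
    then have "(\<lambda>m. supn (e m)) \<longlonglongrightarrow> 0" by (simp add: supn_const)
    then have "eventually (\<lambda>m. supn (e m) < ep) sequentially" using ep by (rule order_tendstoD)
    then obtain M where M: "\<forall>m\<ge>M. supn (e m) < ep" by (auto simp: eventually_sequentially)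
    show "\<exists>K. \<forall>k\<le>K. \<forall>i. c k i \<le> ep"
    proof (intro exI allI impI)
      fix k :: int and i assume k: "k \<le> - int M - 1"
      then have "c k = e (nat (- k))" by (simp add: c_def)
      moreover have "M \<le> nat (- k)" using k by simp
      ultimately show "c k i \<le> ep" using M supn_ge'[of "e (nat (- k))" i] by fastforce
    qed
  qed
  have unb: "\<exists>k. r < supn (d k)" for r
  proof (rule ccontr)
    assume "\<not> ?thesis"
    then have bd: "\<forall>k. supn (d k) \<le> r" by (simp add: not_less)
    have "\<forall>k i. d k i \<le> r" using bd supn_ge' order_trans by blast
    then obtain L where L: "vconv d L" using vconv_incseq[of d r] dinc by blast
    have dnn: "\<forall>k. nonneg (d k)" using dDG DG_nonneg by blast
    have Lnn: "nonneg L" using vconv_nonneg[OF L dnn] .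
    have "vconv (\<lambda>k. d (Suc k)) L" using L unfolding vconv_def by (auto intro: LIMSEQ_Suc)
    then have "vconv (\<lambda>k. Gk (d (Suc k))) (Gk L)" using Gk_tendsto dnn Lnn by blast
    then have "vconv d (Gk L)" by (simp add: dG)
    then have "Gk L = L" using L vconv_unique by blast
    then have "L = (\<lambda>_. 0)" using NF[OF Lnn] by simp
    moreover have "d 0 i \<le> L i" for i using vconv_ge_const[OF L] d0le by blast
    ultimately have "supn (d 0) \<le> 0" using supn_mono[OF dnn[rule_format, of 0], of L]
      by (simp add: supn_const)
    then show False using dsup[of 0] by simp
  qed
  have P6: "\<forall>B. \<exists>K. \<forall>k\<ge>K. \<forall>i. B \<le> c k i"
  proof
    fix B
    obtain r where r: "r \<ge> 0" "B \<le> kap r" using kap_unbdd by blast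
    obtain k0 where k0: "r < supn (d k0)" using unb by blast
    show "\<exists>K. \<forall>k\<ge>K. \<forall>i. B \<le> c k i"
    proof (intro exI allI impI)
      fix k :: int and i assume k: "int k0 \<le> k"
      then have ck: "c k = d (nat k)" by (simp add: c_def)
      have "d k0 i \<le> d (Suc (nat k)) i" for i
        using lift_Suc_mono_le[of "\<lambda>n. d n i" k0 "Suc (nat k)"] dinc k by simp
      then have "supn (d k0) \<le> supn (d (Suc (nat k)))" using supn_mono[OF DG_nonneg[OF dDG]] by blast
      then have "kap r \<le> kap (supn (d (Suc (nat k))))" using kap_mono r k0 by simp
      also have "\<dots> \<le> Gk (d (Suc (nat k))) i" by (rule Gk_ge3)
      also have "\<dots> = c k i" using ck dG by simp
      finally show "B \<le> c k i" using r by simp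
    qed
  qed
  show ?thesis using P1 P2 P3 P4 P5 P6 by blast
qed

end

definition schain :: "(('i \<Rightarrow> real) \<Rightarrow> 'i \<Rightarrow> real) \<Rightarrow> (int \<Rightarrow> 'i \<Rightarrow> real) \<Rightarrow> bool" where
  "schain T y \<longleftrightarrow> (\<forall>k i. 0 < y k i) \<and> (\<forall>k i. y k i < y (k + 1) i) \<and>
     (\<forall>k i. T (y (k + 1)) i \<le> y k i) \<and>
     (\<forall>e>0. \<exists>K. \<forall>k\<le>K. \<forall>i. y k i \<le> e) \<and> (\<forall>B. \<exists>K. \<forall>k\<ge>K. \<forall>i. B \<le> y k i)"

definition theta :: "int \<Rightarrow> real" where "theta k = 1/2 + arctan (real_of_int k) / 4"

lemma theta_mono: "theta k < theta (k + 1)"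
  unfolding theta_def using arctan_less_iff[of "real_of_int k" "real_of_int (k + 1)"] by simp

lemma theta_bounds: "1/2 - pi/8 < theta k" "theta k < 1"
  unfolding theta_def using arctan_bounded[of "real_of_int k"] pi_less_4 by auto

lemma theta_pos: "0 < theta k"
  using theta_bounds(1)[of k] pi_less_4 by linarith

context gopr begin

definition rho2 :: "real \<Rightarrow> real" where "rho2 x = rho1 x / 2"

lemma rho2_Kinf: "class_Kinf rho2"
proof -
  have K: "class_K rho1" by (rule rho1K)
  have "continuous_on {0..} rho2"
  proof -
    have "continuous_on {0..} (\<lambda>x. (1/2) * rho1 x)" by (rule continuous_on_mult_left[OF classK_cont[OF K]])
    then show ?thesis unfolding rho2_def by (simp add: mult.commute)
  qed
  moreover have "strict_mono_on {0..} rho2"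
    unfolding strict_mono_on_def rho2_def using classK_strict[OF K] by auto
  moreover have "rho2 0 = 0" using classK_zero[OF K] by (simp add: rho2_def)
  moreover have "\<exists>r\<ge>0. M < rho2 r" for M
  proof -
    obtain r where "r \<ge> 0" "2 * M < rho1 r" using classKinf_unbdd[OF rho1_Kinf] by blast
    then show ?thesis by (intro exI[of _ r]) (auto simp: rho2_def)
  qed
  ultimately show ?thesis unfolding class_Kinf_def class_K_def by blast
qed

abbreviation T2 where "T2 \<equiv> GR rho2"

lemma T2_le_T1: "nonneg s \<Longrightarrow> T2 s i \<le> T1 s i"
  by (rule GR_le_rho) (use classK_nonneg[OF rho1K] in \<open>auto simp: rho2_def\<close>)

lemma T2_strict: "nonneg s \<Longrightarrow> 0 < x \<Longrightarrow> T1 s i \<le> x \<Longrightarrow> T2 s i < x"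
proof -
  assume a: "nonneg s" "0 < x" "T1 s i \<le> x"
  show ?thesis
  proof (cases "G s i = 0")
    case True
    then show ?thesis using a classK_zero[OF classKinf_K[OF rho2_Kinf]] by (simp add: GR_eq)
  next
    case False
    then have "0 < G s i" using G_nonneg[OF a(1), of i] by linarith
    then have "0 < rho1 (G s i)" using classK_pos[OF rho1K] by blast
    then show ?thesis using a(3) by (simp add: GR_eq rho2_def)
  qed
qed

lemma schain_exists: "\<exists>y. schain T2 y"
proof -
  obtain c :: "int \<Rightarrow> 'i \<Rightarrow> real" where c: "\<forall>k i. 0 < c k i" "\<forall>k i. c k i \<le> c (k + 1) i"
     "\<forall>k. nonneg (c k)" "\<forall>k i. T1 (c (k + 1)) i \<le> c k i"
     "\<forall>e>0. \<exists>K. \<forall>k\<le>K. \<forall>i. c k i \<le> e" "\<forall>B. \<exists>K. \<forall>k\<ge>K. \<forall>i. B \<le> c k i"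
    using chain_exists by blast
  define a where "a k i = T2 (c (k + 1)) i" for k i
  have a_nn: "0 \<le> a k i" for k i using GR_nonneg[OF classKinf_K[OF rho2_Kinf] c(3)[rule_format]] by (simp add: a_def)
  have a_lt: "a k i < c k i" for k i using T2_strict c by (simp add: a_def)
  have a_mono: "a k i \<le> a (k + 1) i" for k i
    unfolding a_def using GR_mono[OF classKinf_K[OF rho2_Kinf] c(3)[rule_format]] c(2)
    by (metis add.commute add.left_commute)
  define y where "y k i = theta k * c k i + (1 - theta k) * a k i" for k i
  have th: "0 < theta k" "theta k < 1" for k using theta_pos theta_bounds by auto
  have y_le_c: "y k i \<le> c k i" for k i
  proof -
    have "(1 - theta k) * a k i \<le> (1 - theta k) * c k i" using a_lt[of k i] th[of k] by simp
    then show ?thesis unfolding y_def by (simp add: algebra_simps)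
  qed
  have y_ge_a: "a k i \<le> y k i" for k i
  proof -
    have "theta k * a k i \<le> theta k * c k i" using a_lt[of k i] th[of k] by simp
    then show ?thesis unfolding y_def by (simp add: algebra_simps)
  qed
  have y_ge_c: "theta k * c k i \<le> y k i" for k i
    unfolding y_def using a_nn[of k i] th[of k] by simp
  have Y1: "\<forall>k i. 0 < y k i"
    using y_ge_c c(1) th by (meson mult_pos_pos order_less_le_trans)
  have ynn: "nonneg (y k)" for k using Y1 by (simp add: nonneg_def less_imp_le)
  have Y2: "\<forall>k i. y k i < y (k + 1) i"
  proof (intro allI)
    fix k i
    define t where "t = theta k"
    define t' where "t' = theta (k + 1)"
    define cc where "cc = c k i"
    define cc' where "cc' = c (k + 1) i"
    define aa where "aa = a k i"
    define aa' where "aa' = a (k + 1) i"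
    have h: "t < t'" "0 < t" "t' < 1" "cc \<le> cc'" "aa \<le> aa'" "aa' < cc'"
      using theta_mono th c(2) a_mono a_lt unfolding t_def t'_def cc_def cc'_def aa_def aa'_def by auto
    have "t * cc + (1 - t) * aa \<le> t * cc' + (1 - t) * aa'"
      using h by (intro add_mono mult_left_mono) auto
    moreover have "t * cc' + (1 - t) * aa' < t' * cc' + (1 - t') * aa'"
    proof -
      have "0 < (t' - t) * (cc' - aa')" using h by simp
      then show ?thesis by (simp add: algebra_simps)
    qed
    ultimately show "y k i < y (k + 1) i" unfolding y_def t_def t'_def cc_def cc'_def aa_def aa'_def by linarith
  qed
  have Y3: "\<forall>k i. T2 (y (k + 1)) i \<le> y k i"
  proof (intro allI)
    fix k i
    have "T2 (y (k + 1)) i \<le> T2 (c (k + 1)) i"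
      using GR_mono[OF classKinf_K[OF rho2_Kinf] ynn] y_le_c by blast
    then show "T2 (y (k + 1)) i \<le> y k i" using y_ge_a[of k i] by (simp add: a_def)
  qed
  have Y4: "\<forall>e>0. \<exists>K. \<forall>k\<le>K. \<forall>i. y k i \<le> e"
    using c(5) y_le_c order_trans by meson
  have Y5: "\<forall>B. \<exists>K. \<forall>k\<ge>K. \<forall>i. B \<le> y k i"
  proof
    fix B
    define tm where "tm = 1/2 - pi/8"
    have tm: "0 < tm" using pi_less_4 by (simp add: tm_def)
    obtain K where K: "\<forall>k\<ge>K. \<forall>i. B / tm \<le> c k i" using c(6) by blast
    show "\<exists>K. \<forall>k\<ge>K. \<forall>i. B \<le> y k i"
    proof (intro exI allI impI)
      fix k i assume "K \<le> k"
      then have ck: "B / tm \<le> c k i" using K by blast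
      have "B \<le> tm * c k i"
      proof (cases "B \<le> 0")
        case True then show ?thesis using tm c(1)[rule_format, of k i] by (simp add: order_trans[OF True])
      next
        case False then show ?thesis using ck tm by (simp add: divide_le_eq mult.commute)
      qed
      also have "\<dots> \<le> theta k * c k i" using theta_bounds(1)[of k] c(1) tm_def
        by (intro mult_right_mono) (auto simp: less_imp_le)
      also have "\<dots> \<le> y k i" by (rule y_ge_c)
      finally show "B \<le> y k i" .
    qed
  qed
  show ?thesis unfolding schain_def using Y1 Y2 Y3 Y4 Y5 by blast
qed

end

lemma Kinf_surj:
  assumes f: "class_Kinf f" and y: "y \<ge> 0"
  shows "\<exists>x\<ge>0. f x = y"
proof -
  obtain r where r: "r \<ge> 0" "y < f r" using classKinf_unbdd[OF f] by blast
  have "continuous_on {0..r} f" using classK_cont[OF classKinf_K[OF f]] by (rule continuous_on_subset) auto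
  moreover have "f 0 \<le> y" using classK_zero[OF classKinf_K[OF f]] y by simp
  ultimately obtain x where "0 \<le> x" "x \<le> r" "f x = y" using IVT'[of f 0 y r] r by auto
  then show ?thesis by blast
qed

lemma Kinf_inj: "class_Kinf f \<Longrightarrow> inj_on f {0..}"
  using strict_mono_on_imp_inj_on classKinf_K class_K_def by blast

lemma Kinf_img: "class_Kinf f \<Longrightarrow> f ` {0..} = {0..}"
proof
  assume f: "class_Kinf f"
  show "f ` {0..} \<subseteq> {0..}" using classK_nonneg[OF classKinf_K[OF f]] by auto
  show "{0..} \<subseteq> f ` {0..}" using Kinf_surj[OF f] by force
qed

definition Kinv :: "(real \<Rightarrow> real) \<Rightarrow> real \<Rightarrow> real" where
  "Kinv f = the_inv_into {0..} f"

lemma Kinv_f: "class_Kinf f \<Longrightarrow> x \<ge> 0 \<Longrightarrow> Kinv f (f x) = x"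
  unfolding Kinv_def using the_inv_into_f_f Kinf_inj by fastforce

lemma f_Kinv: "class_Kinf f \<Longrightarrow> y \<ge> 0 \<Longrightarrow> f (Kinv f y) = y"
  unfolding Kinv_def using f_the_inv_into_f[OF Kinf_inj] Kinf_img by fastforce

lemma Kinv_nonneg: "class_Kinf f \<Longrightarrow> y \<ge> 0 \<Longrightarrow> Kinv f y \<ge> 0"
  unfolding Kinv_def using the_inv_into_into[OF Kinf_inj, of f y "{0..}"] Kinf_img by fastforce

lemma Kinf_less_iff: "class_Kinf f \<Longrightarrow> x \<ge> 0 \<Longrightarrow> y \<ge> 0 \<Longrightarrow> f x < f y \<longleftrightarrow> x < y"
  by (meson classK_mono classK_strict classKinf_K not_le)

lemma Kinf_le_iff: "class_Kinf f \<Longrightarrow> x \<ge> 0 \<Longrightarrow> y \<ge> 0 \<Longrightarrow> f x \<le> f y \<longleftrightarrow> x \<le> y"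
  by (meson Kinf_less_iff not_le)

lemma Kinv_Kinf:
  assumes f: "class_Kinf f"
  shows "class_Kinf (Kinv f)"
proof -
  define g where "g = Kinv f"
  have gf: "x \<ge> 0 \<Longrightarrow> g (f x) = x" for x using Kinv_f[OF f] by (simp add: g_def)
  have fg: "y \<ge> 0 \<Longrightarrow> f (g y) = y" for y using f_Kinv[OF f] by (simp add: g_def)
  have gn: "y \<ge> 0 \<Longrightarrow> g y \<ge> 0" for y using Kinv_nonneg[OF f] by (simp add: g_def)
  have fK: "class_K f" using classKinf_K[OF f] .
  have sm: "strict_mono_on {0..} g"
  proof (rule strict_mono_onI)
    fix a b :: real assume ab: "a \<in> {0..}" "b \<in> {0..}" "a < b"
    then show "g a < g b" using Kinf_less_iff[OF f gn gn, of a b] fg by simp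
  qed
  have g0: "g 0 = 0" using gf[of 0] classK_zero[OF fK] by simp
  have unb: "\<exists>r\<ge>0. M < g r" for M
  proof -
    define x where "x = \<bar>M\<bar> + 1"
    have "g (f x) = x" using gf by (simp add: x_def)
    moreover have "f x \<ge> 0" using classK_nonneg[OF fK] by (simp add: x_def)
    ultimately show ?thesis by (intro exI[of _ "f x"]) (auto simp: x_def)
  qed
  have cont: "continuous_on {0..} g"
    unfolding continuous_on_eq_continuous_within
  proof
    fix y :: real assume y: "y \<in> {0..}"
    obtain n where n: "n \<ge> 0" "y < f n" using classKinf_unbdd[OF f] by blast
    have cn: "continuous_on {0..n} f" using classK_cont[OF fK] by (rule continuous_on_subset) auto
    have img: "f ` {0..n} = {0..f n}"
    proof
      show "f ` {0..n} \<subseteq> {0..f n}" using classK_nonneg[OF fK] classK_mono[OF fK] by auto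
      show "{0..f n} \<subseteq> f ` {0..n}"
      proof
        fix z assume z: "z \<in> {0..f n}"
        then have "\<exists>x. 0 \<le> x \<and> x \<le> n \<and> f x = z" using IVT'[of f 0 z n] cn n classK_zero[OF fK] by auto
        then show "z \<in> f ` {0..n}" by auto
      qed
    qed
    have "continuous_on (f ` {0..n}) g" using continuous_on_inv[OF cn compact_Icc] gf by auto
    then have "continuous (at y within {0..f n}) g" using img y n
      unfolding continuous_on_eq_continuous_within by auto
    moreover have "at y within {0..} = at y within {0..f n}"
      by (rule at_within_nhd[of y "{..<f n}"]) (use n in auto)
    ultimately show "continuous (at y within {0..}) g" by simp
  qed
  show ?thesis unfolding g_def[symmetric] class_Kinf_def class_K_def using cont sm g0 unb by blast
qed

lemma Kinf_comp:
  assumes f: "class_Kinf f" and g: "class_Kinf g"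
  shows "class_Kinf (\<lambda>x. f (g x))"
proof -
  have fK: "class_K f" and gK: "class_K g" using f g classKinf_K by auto
  have "continuous_on {0..} (\<lambda>x. f (g x))"
    by (rule continuous_on_compose2[OF classK_cont[OF fK] classK_cont[OF gK]]) (use classK_nonneg[OF gK] in auto)
  moreover have "strict_mono_on {0..} (\<lambda>x. f (g x))"
    unfolding strict_mono_on_def using classK_strict[OF fK] classK_strict[OF gK] classK_nonneg[OF gK] by auto
  moreover have "f (g 0) = 0" using classK_zero[OF fK] classK_zero[OF gK] by simp
  moreover have "\<exists>r\<ge>0. M < f (g r)" for M
  proof -
    obtain a where a: "a \<ge> 0" "M < f a" using classKinf_unbdd[OF f] by blast
    obtain r where r: "r \<ge> 0" "a < g r" using classKinf_unbdd[OF g] by blast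
    have "f a < f (g r)" using classK_strict[OF fK a(1) r(2)] .
    then show ?thesis using a r by (intro exI[of _ r]) auto
  qed
  ultimately show ?thesis unfolding class_Kinf_def class_K_def by blast
qed

lemma Kinf_scale:
  assumes f: "class_Kinf f" and c: "c > 0"
  shows "class_Kinf (\<lambda>x. f (c * x))"
proof -
  have "class_Kinf (\<lambda>x. c * x)"
  proof -
    have "continuous_on {0..} (\<lambda>x::real. c * x)" by (intro continuous_intros)
    moreover have "strict_mono_on {0..} (\<lambda>x::real. c * x)" unfolding strict_mono_on_def using c by simp
    moreover have "\<exists>r\<ge>0. M < c * r" for M
    proof -
      have "c * ((\<bar>M\<bar> + 1) / c) = \<bar>M\<bar> + 1" using c by simp
      then show ?thesis using c by (intro exI[of _ "(\<bar>M\<bar> + 1) / c"]) auto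
    qed
    ultimately show ?thesis unfolding class_Kinf_def class_K_def by simp
  qed
  then show ?thesis using Kinf_comp[OF f] by blast
qed

lemma Kinf_sum:
  fixes f :: "'i::finite \<Rightarrow> real \<Rightarrow> real"
  assumes f: "\<forall>i. class_Kinf (f i)"
  shows "class_Kinf (\<lambda>r. \<Sum>i\<in>UNIV. f i r)"
proof -
  have K: "class_K (f i)" for i using f classKinf_K by blast
  have "continuous_on {0..} (\<lambda>r. \<Sum>i\<in>UNIV. f i r)"
    by (intro continuous_on_sum) (use K classK_cont in blast)
  moreover have "strict_mono_on {0..} (\<lambda>r. \<Sum>i\<in>UNIV. f i r)"
  proof (rule strict_mono_onI)
    fix a b :: real assume ab: "a \<in> {0..}" "b \<in> {0..}" "a < b"
    show "(\<Sum>i\<in>UNIV. f i a) < (\<Sum>i\<in>UNIV. f i b)"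
      by (rule sum_strict_mono) (use ab classK_strict[OF K] in auto)
  qed
  moreover have "(\<Sum>i\<in>UNIV. f i 0) = 0" using classK_zero[OF K] by simp
  moreover have "\<exists>r\<ge>0. M < (\<Sum>i\<in>UNIV. f i r)" for M
  proof -
    fix i0 :: 'i
    obtain r where r: "r \<ge> 0" "M < f i0 r" using classKinf_unbdd f by blast
    have "f i0 r \<le> (\<Sum>i\<in>UNIV. f i r)"
      by (rule member_le_sum) (use classK_nonneg[OF K] r in auto)
    then show ?thesis using r by (intro exI[of _ r]) auto
  qed
  ultimately show ?thesis unfolding class_Kinf_def class_K_def by blast
qed

definition p2 :: "int \<Rightarrow> real" where "p2 k = 2 powr (real_of_int k)"

lemma p2_pos: "0 < p2 k" by (simp add: p2_def)
lemma p2_Suc: "p2 (k + 1) = 2 * p2 k" by (simp add: p2_def powr_add)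
lemma p2_less: "k < k' \<Longrightarrow> p2 k < p2 k'" unfolding p2_def by (intro powr_less_mono) auto
lemma p2_le: "k \<le> k' \<Longrightarrow> p2 k \<le> p2 k'" using p2_less by (cases "k = k'") (auto intro: less_imp_le)
lemma p2_less_iff: "p2 k < p2 k' \<longleftrightarrow> k < k'" using p2_less p2_le by (meson not_le)
lemma p2_le_iff: "p2 k \<le> p2 k' \<longleftrightarrow> k \<le> k'" using p2_less p2_le by (meson not_le)

lemma flog: "0 < r \<Longrightarrow> p2 \<lfloor>log 2 r\<rfloor> \<le> r \<and> r < p2 (\<lfloor>log 2 r\<rfloor> + 1)"
  unfolding p2_def using floor_log_eq_powr_iff[of r 2 "\<lfloor>log 2 r\<rfloor>"] by simp

lemma flog_eq: "p2 k \<le> r \<Longrightarrow> r < p2 (k + 1) \<Longrightarrow> \<lfloor>log 2 r\<rfloor> = k"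
proof -
  assume a: "p2 k \<le> r" "r < p2 (k + 1)"
  have "0 < r" using a(1) p2_pos[of k] by linarith
  then show ?thesis using floor_log_eq_powr_iff[of r 2 k] a by (simp add: p2_def)
qed

lemma pmono:
  fixes f :: "real \<Rightarrow> real"
  assumes piece: "\<forall>k. k0 \<le> k \<longrightarrow> k < K \<longrightarrow> (\<forall>a b. p2 k \<le> a \<longrightarrow> a \<le> b \<longrightarrow> b \<le> p2 (k + 1) \<longrightarrow> f a \<le> f b)"
    and kK: "k0 \<le> K"
  shows "\<forall>a b. p2 k0 \<le> a \<longrightarrow> a \<le> b \<longrightarrow> b \<le> p2 K \<longrightarrow> f a \<le> f b"
  using kK piece
proof (induction K rule: int_ge_induct)
  case base
  show ?case
  proof (intro allI impI)
    fix a b assume "p2 k0 \<le> a" "a \<le> b" "b \<le> p2 k0"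
    then have "a = b" by linarith
    then show "f a \<le> f b" by simp
  qed
next
  case (step K)
  show ?case
  proof (intro allI impI)
    fix a b assume ab: "p2 k0 \<le> a" "a \<le> b" "b \<le> p2 (K + 1)"
    have IH: "\<forall>a b. p2 k0 \<le> a \<longrightarrow> a \<le> b \<longrightarrow> b \<le> p2 K \<longrightarrow> f a \<le> f b" using step by auto
    have pK: "\<forall>a b. p2 K \<le> a \<longrightarrow> a \<le> b \<longrightarrow> b \<le> p2 (K + 1) \<longrightarrow> f a \<le> f b" using step by auto
    show "f a \<le> f b"
    proof (cases "b \<le> p2 K")
      case True then show ?thesis using IH ab by blast
    next
      case False
      show ?thesis
      proof (cases "p2 K \<le> a")
        case True then show ?thesis using pK ab by blast
      next
        case False2: False
        have "f a \<le> f (p2 K)" using IH ab False2 by auto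
        also have "\<dots> \<le> f b" using pK ab False by auto
        finally show ?thesis .
      qed
    qed
  qed
qed

locale pchain =
  fixes y :: "int \<Rightarrow> 'i::finite \<Rightarrow> real"
  assumes P1: "\<forall>k i. 0 < y k i" and P2: "\<forall>k i. y k i < y (k + 1) i"
    and P4: "\<forall>e>0. \<exists>K. \<forall>k\<le>K. \<forall>i. y k i \<le> e" and P5: "\<forall>B. \<exists>K. \<forall>k\<ge>K. \<forall>i. B \<le> y k i"
begin

definition pw :: "real \<Rightarrow> 'i \<Rightarrow> real" where
  "pw r i = (if r \<le> 0 then 0 else y \<lfloor>log 2 r\<rfloor> i + (r / p2 \<lfloor>log 2 r\<rfloor> - 1) * (y (\<lfloor>log 2 r\<rfloor> + 1) i - y \<lfloor>log 2 r\<rfloor> i))"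

lemma y_mono: "k \<le> k' \<Longrightarrow> y k i \<le> y k' i"
proof (induction k' rule: int_ge_induct)
  case (step k') then show ?case using P2[rule_format, of k' i] by linarith
qed simp

lemma y_strict: "k < k' \<Longrightarrow> y k i < y k' i"
proof -
  assume "k < k'"
  then have "y (k + 1) i \<le> y k' i" using y_mono[of "k + 1" k' i] by simp
  then show ?thesis using P2[rule_format, of k i] by linarith
qed

lemma pw0: "r \<le> 0 \<Longrightarrow> pw r i = 0" by (simp add: pw_def)

lemma piece: "p2 k \<le> r \<Longrightarrow> r \<le> p2 (k + 1) \<Longrightarrow> pw r i = y k i + (r / p2 k - 1) * (y (k + 1) i - y k i)"
proof -
  assume r: "p2 k \<le> r" "r \<le> p2 (k + 1)"
  have rpos: "0 < r" using r p2_pos order_less_le_trans by blast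
  show ?thesis
  proof (cases "r < p2 (k + 1)")
    case True
    then have "\<lfloor>log 2 r\<rfloor> = k" using flog_eq r by blast
    then show ?thesis using rpos by (simp add: pw_def)
  next
    case False
    then have req: "r = p2 (k + 1)" using r by simp
    have "p2 (k + 1) < p2 (k + 1 + 1)" by (rule p2_less) simp
    then have "\<lfloor>log 2 r\<rfloor> = k + 1" using flog_eq req by blast
    moreover have "r / p2 k = 2" using req p2_Suc p2_pos by (metis nonzero_mult_div_cancel_right less_irrefl)
    ultimately show ?thesis using rpos req by (simp add: pw_def p2_Suc)
  qed
qed

lemma pw_at: "pw (p2 k) i = y k i"
proof -
  have "p2 k \<noteq> 0" using p2_pos[of k] by simp
  then show ?thesis using piece[of k "p2 k" i] p2_Suc[of k] p2_pos[of k] by simp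
qed

lemma bracket: "p2 k \<le> r \<Longrightarrow> r \<le> p2 (k + 1) \<Longrightarrow> y k i \<le> pw r i \<and> pw r i \<le> y (k + 1) i"
proof -
  assume r: "p2 k \<le> r" "r \<le> p2 (k + 1)"
  define t where "t = r / p2 k - 1"
  have t: "0 \<le> t" "t \<le> 1" using r p2_pos[of k] p2_Suc[of k] by (auto simp: t_def field_simps)
  have d: "0 \<le> y (k + 1) i - y k i" using P2 by (simp add: less_imp_le)
  have "pw r i = y k i + t * (y (k + 1) i - y k i)" using piece[OF r] by (simp add: t_def)
  moreover have "0 \<le> t * (y (k + 1) i - y k i)" using t d by simp
  moreover have "t * (y (k + 1) i - y k i) \<le> 1 * (y (k + 1) i - y k i)" using t d by (intro mult_right_mono) auto
  ultimately show ?thesis by simp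
qed

definition sl :: "int \<Rightarrow> 'i \<Rightarrow> real" where "sl k i = (y (k + 1) i - y k i) / p2 k"

lemma sl_pos: "0 < sl k i" using P2 p2_pos by (simp add: sl_def)

lemma slope: "p2 k \<le> a \<Longrightarrow> a \<le> b \<Longrightarrow> b \<le> p2 (k + 1) \<Longrightarrow> pw b i - pw a i = (b - a) * sl k i"
proof -
  assume ab: "p2 k \<le> a" "a \<le> b" "b \<le> p2 (k + 1)"
  have "pw b i - pw a i = (b / p2 k - a / p2 k) * (y (k + 1) i - y k i)"
    using piece[of k a i] piece[of k b i] ab by (simp add: algebra_simps)
  also have "\<dots> = (b - a) * sl k i" using p2_pos[of k] by (simp add: sl_def field_simps)
  finally show ?thesis .
qed

lemma lip:
  assumes kK: "k0 < K"
  shows "\<exists>m M. 0 < m \<and> m \<le> M \<and> (\<forall>i a b. p2 k0 \<le> a \<longrightarrow> a \<le> b \<longrightarrow> b \<le> p2 K \<longrightarrow>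
           m * (b - a) \<le> pw b i - pw a i \<and> pw b i - pw a i \<le> M * (b - a))"
proof -
  define S where "S = (\<lambda>(k, i). sl k i) ` ({k0..<K} \<times> UNIV)"
  have fS: "finite S" unfolding S_def by simp
  have neS: "S \<noteq> {}" unfolding S_def using kK by auto
  define m where "m = Min S"
  define M where "M = Max S"
  have mS: "m \<le> sl k i" if "k0 \<le> k" "k < K" for k i
    unfolding m_def S_def by (rule Min_le) (use that in auto)
  have MS: "sl k i \<le> M" if "k0 \<le> k" "k < K" for k i
    unfolding M_def S_def by (rule Max_ge) (use that in auto)
  have m0: "0 < m" unfolding m_def using fS neS by (subst Min_gr_iff) (auto simp: S_def sl_pos)
  have mM: "m \<le> M" using mS[of k0 undefined] MS[of k0 undefined] kK by linarith
  have lo: "\<forall>a b. p2 k0 \<le> a \<longrightarrow> a \<le> b \<longrightarrow> b \<le> p2 K \<longrightarrow> (\<lambda>x. pw x i - m * x) a \<le> (\<lambda>x. pw x i - m * x) b" for i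
  proof (rule pmono)
    show "k0 \<le> K" using kK by simp
    show "\<forall>k. k0 \<le> k \<longrightarrow> k < K \<longrightarrow> (\<forall>a b. p2 k \<le> a \<longrightarrow> a \<le> b \<longrightarrow> b \<le> p2 (k + 1) \<longrightarrow>
        (\<lambda>x. pw x i - m * x) a \<le> (\<lambda>x. pw x i - m * x) b)"
    proof (intro allI impI)
      fix k a b assume h: "k0 \<le> k" "k < K" "p2 k \<le> a" "a \<le> b" "b \<le> p2 (k + 1)"
      have "pw b i - pw a i = (b - a) * sl k i" using slope h by blast
      moreover have "(b - a) * m \<le> (b - a) * sl k i" using mS[OF h(1,2)] h by (intro mult_left_mono) auto
      ultimately show "(\<lambda>x. pw x i - m * x) a \<le> (\<lambda>x. pw x i - m * x) b" by (simp add: algebra_simps)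
    qed
  qed
  have hi: "\<forall>a b. p2 k0 \<le> a \<longrightarrow> a \<le> b \<longrightarrow> b \<le> p2 K \<longrightarrow> (\<lambda>x. M * x - pw x i) a \<le> (\<lambda>x. M * x - pw x i) b" for i
  proof (rule pmono)
    show "k0 \<le> K" using kK by simp
    show "\<forall>k. k0 \<le> k \<longrightarrow> k < K \<longrightarrow> (\<forall>a b. p2 k \<le> a \<longrightarrow> a \<le> b \<longrightarrow> b \<le> p2 (k + 1) \<longrightarrow>
        (\<lambda>x. M * x - pw x i) a \<le> (\<lambda>x. M * x - pw x i) b)"
    proof (intro allI impI)
      fix k a b assume h: "k0 \<le> k" "k < K" "p2 k \<le> a" "a \<le> b" "b \<le> p2 (k + 1)"
      have "pw b i - pw a i = (b - a) * sl k i" using slope h by blast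
      moreover have "(b - a) * sl k i \<le> (b - a) * M" using MS[OF h(1,2)] h by (intro mult_left_mono) auto
      ultimately show "(\<lambda>x. M * x - pw x i) a \<le> (\<lambda>x. M * x - pw x i) b" by (simp add: algebra_simps)
    qed
  qed
  show ?thesis
  proof (intro exI conjI allI impI)
    show "0 < m" "m \<le> M" using m0 mM by auto
    fix i a b assume ab: "p2 k0 \<le> a" "a \<le> b" "b \<le> p2 K"
    have "pw a i - m * a \<le> pw b i - m * b" using lo[of i] ab by blast
    then show "m * (b - a) \<le> pw b i - pw a i" by (simp add: algebra_simps)
    have "M * a - pw a i \<le> M * b - pw b i" using hi[of i] ab by blast
    then show "pw b i - pw a i \<le> M * (b - a)" by (simp add: algebra_simps)
  qed
qed

end

context pchain begin

lemma pw_pos: "0 < r \<Longrightarrow> 0 < pw r i"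
proof -
  assume r: "0 < r"
  have "y \<lfloor>log 2 r\<rfloor> i \<le> pw r i" using bracket flog[OF r] by (meson less_imp_le)
  then show ?thesis using P1 by (meson order_less_le_trans)
qed

lemma pw_nonneg: "0 \<le> pw r i"
  using pw_pos[of r i] pw0[of r i] by (cases "r \<le> 0") auto

lemma pw_strict: "0 \<le> a \<Longrightarrow> a < b \<Longrightarrow> pw a i < pw b i"
proof -
  assume ab: "0 \<le> a" "a < b"
  show ?thesis
  proof (cases "a = 0")
    case True then show ?thesis using pw_pos[of b i] pw0[of 0 i] ab by simp
  next
    case False
    then have a0: "0 < a" using ab by simp
    define k0 where "k0 = \<lfloor>log 2 a\<rfloor>"
    define K where "K = \<lfloor>log 2 b\<rfloor> + 1"
    have h1: "p2 k0 \<le> a" using flog[OF a0] by (simp add: k0_def)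
    have h2: "b < p2 K" using flog[of b] ab a0 by (simp add: K_def)
    have "p2 k0 < p2 K" using h1 h2 ab by linarith
    then have kK: "k0 < K" by (simp add: p2_less_iff)
    obtain m M where mM: "0 < m" "\<forall>i a b. p2 k0 \<le> a \<longrightarrow> a \<le> b \<longrightarrow> b \<le> p2 K \<longrightarrow>
           m * (b - a) \<le> pw b i - pw a i \<and> pw b i - pw a i \<le> M * (b - a)"
      using lip[OF kK] by blast
    have "m * (b - a) \<le> pw b i - pw a i" using mM h1 h2 ab by auto
    moreover have "0 < m * (b - a)" using mM ab by simp
    ultimately show ?thesis by linarith
  qed
qed

lemma pw_mono: "0 \<le> a \<Longrightarrow> a \<le> b \<Longrightarrow> pw a i \<le> pw b i"
  using pw_strict[of a b i] by (cases "a = b") auto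

lemma pw_cont: "continuous_on {0..} (\<lambda>r. pw r i)"
  unfolding continuous_on_eq_continuous_within
proof
  fix x :: real assume x: "x \<in> {0..}"
  show "continuous (at x within {0..}) (\<lambda>r. pw r i)"
  proof (cases "x = 0")
    case True
    show ?thesis unfolding continuous_within_eps_delta
    proof (intro allI impI)
      fix e :: real assume e: "0 < e"
      obtain K0 where K0: "\<forall>k\<le>K0. \<forall>i. y k i \<le> e / 2" using P4 e by (meson half_gt_zero)
      show "\<exists>d>0. \<forall>x'\<in>{0..}. dist x' x < d \<longrightarrow> dist (pw x' i) (pw x i) < e"
      proof (intro exI conjI ballI impI)
        show "0 < p2 K0" by (rule p2_pos)
        fix x' :: real assume x': "x' \<in> {0..}" "dist x' x < p2 K0"
        show "dist (pw x' i) (pw x i) < e"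
        proof (cases "x' = 0")
          case True then show ?thesis using e \<open>x = 0\<close> by (simp add: pw0)
        next
          case False
          then have xp: "0 < x'" using x' by simp
          define k' where "k' = \<lfloor>log 2 x'\<rfloor>"
          have "p2 k' \<le> x'" "x' \<le> p2 (k' + 1)" using flog[OF xp] by (auto simp: k'_def less_imp_le)
          then have pwle: "pw x' i \<le> y (k' + 1) i" using bracket by blast
          have "x' < p2 K0" using x' \<open>x = 0\<close> xp by (simp add: dist_real_def)
          then have "p2 k' < p2 K0" using \<open>p2 k' \<le> x'\<close> by linarith
          then have "k' + 1 \<le> K0" by (simp add: p2_less_iff)
          then have "y (k' + 1) i \<le> e / 2" using K0 by blast
          then show ?thesis using pwle pw_nonneg[of x' i] \<open>x = 0\<close> e by (simp add: dist_real_def pw0)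
        qed
      qed
    qed
  next
    case False
    then have xp: "0 < x" using x by simp
    define k where "k = \<lfloor>log 2 x\<rfloor>"
    define k0 where "k0 = k - 1"
    define K where "K = k + 2"
    have a1: "p2 k0 < x"
    proof -
      have "p2 k0 < p2 k" by (rule p2_less) (simp add: k0_def)
      then show ?thesis using flog[OF xp] by (simp add: k_def)
    qed
    have a2: "x < p2 K"
    proof -
      have "p2 (k + 1) < p2 K" by (rule p2_less) (simp add: K_def)
      then show ?thesis using flog[OF xp] by (simp add: k_def)
    qed
    have kK: "k0 < K" by (simp add: k0_def K_def)
    obtain m M where mM: "0 < m" "m \<le> M" "\<forall>i a b. p2 k0 \<le> a \<longrightarrow> a \<le> b \<longrightarrow> b \<le> p2 K \<longrightarrow>
           m * (b - a) \<le> pw b i - pw a i \<and> pw b i - pw a i \<le> M * (b - a)"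
      using lip[OF kK] by blast
    have Lp: "\<bar>pw a i - pw x i\<bar> \<le> M * \<bar>a - x\<bar>" if "p2 k0 \<le> a" "a \<le> p2 K" for a
    proof (cases "a \<le> x")
      case True
      have h: "m * (x - a) \<le> pw x i - pw a i \<and> pw x i - pw a i \<le> M * (x - a)"
        using mM(3) that True a2 by auto
      moreover have "0 \<le> m * (x - a)" using mM(1) True by simp
      ultimately show ?thesis using True by (simp add: abs_if)
    next
      case False
      have h: "m * (a - x) \<le> pw a i - pw x i \<and> pw a i - pw x i \<le> M * (a - x)"
        using mM(3) that False a1 by auto
      moreover have "0 \<le> m * (a - x)" using mM(1) False by simp
      ultimately show ?thesis using False by (simp add: abs_if)
    qed
    show ?thesis unfolding continuous_within_eps_delta
    proof (intro allI impI)
      fix e :: real assume e: "0 < e"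
      define d where "d = min (min (x - p2 k0) (p2 K - x)) (e / (M + 1))"
      have d: "0 < d" using a1 a2 e mM by (simp add: d_def)
      show "\<exists>d>0. \<forall>x'\<in>{0..}. dist x' x < d \<longrightarrow> dist (pw x' i) (pw x i) < e"
      proof (intro exI conjI ballI impI)
        show "0 < d" by (rule d)
        fix x' :: real assume x': "x' \<in> {0..}" "dist x' x < d"
        then have b: "p2 k0 \<le> x'" "x' \<le> p2 K" by (auto simp: d_def dist_real_def)
        have "\<bar>pw x' i - pw x i\<bar> \<le> M * \<bar>x' - x\<bar>" using Lp[OF b] .
        also have "\<dots> \<le> M * d" using x' mM by (intro mult_left_mono) (auto simp: dist_real_def)
        also have "\<dots> \<le> M * (e / (M + 1))" using mM by (intro mult_left_mono) (auto simp: d_def)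
        also have "\<dots> < e" using mM e by (simp add: field_simps)
        finally show "dist (pw x' i) (pw x i) < e" by (simp add: dist_real_def)
      qed
    qed
  qed
qed

lemma pw_Kinf: "class_Kinf (\<lambda>r. pw r i)"
proof -
  have "strict_mono_on {0..} (\<lambda>r. pw r i)" by (rule strict_mono_onI) (use pw_strict in auto)
  moreover have "\<exists>r\<ge>0. M < pw r i" for M
  proof -
    obtain K where K: "\<forall>k\<ge>K. \<forall>i. M + 1 \<le> y k i" using P5 by blast
    then have "M + 1 \<le> y K i" by blast
    then have "M < pw (p2 K) i" using pw_at[of K i] by simp
    then show ?thesis using p2_pos[of K] by (intro exI[of _ "p2 K"]) auto
  qed
  ultimately show ?thesis unfolding class_Kinf_def class_K_def using pw_cont pw0[of 0] by auto
qed

lemma pw_inv_lip: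
  assumes C: "compact C" "C \<subseteq> {0<..}"
  shows "\<exists>l L. 0 < l \<and> l \<le> L \<and> (\<forall>r1\<in>C. \<forall>r2\<in>C. \<forall>i.
           l * \<bar>r1 - r2\<bar> \<le> \<bar>the_inv_into {0..} (\<lambda>r. pw r i) r1 - the_inv_into {0..} (\<lambda>r. pw r i) r2\<bar>
         \<and> \<bar>the_inv_into {0..} (\<lambda>r. pw r i) r1 - the_inv_into {0..} (\<lambda>r. pw r i) r2\<bar> \<le> L * \<bar>r1 - r2\<bar>)"
proof (cases "C = {}")
  case True then show ?thesis by (intro exI[of _ 1]) auto
next
  case False
  obtain a where a: "a \<in> C" "\<forall>v\<in>C. a \<le> v" using compact_attains_inf[OF C(1) False] by blast
  obtain b where b: "b \<in> C" "\<forall>v\<in>C. v \<le> b" using compact_attains_sup[OF C(1) False] by blast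
  have a0: "0 < a" using a C by auto
  obtain K0 where K0: "\<forall>k\<le>K0. \<forall>i. y k i \<le> a / 2" using P4 a0 by (meson half_gt_zero)
  obtain K1 where K1: "\<forall>k\<ge>K1. \<forall>i. b + 1 \<le> y k i" using P5 by blast
  define kl where "kl = min K0 (K1 - 1)"
  define kh where "kh = max K1 (kl + 1)"
  have klh: "kl < kh" by (simp add: kl_def kh_def)
  obtain m M where mM: "0 < m" "m \<le> M" "\<forall>i a b. p2 kl \<le> a \<longrightarrow> a \<le> b \<longrightarrow> b \<le> p2 kh \<longrightarrow>
           m * (b - a) \<le> pw b i - pw a i \<and> pw b i - pw a i \<le> M * (b - a)"
    using lip[OF klh] by blast
  define inv where "inv i = the_inv_into {0..} (\<lambda>r. pw r i)" for i
  have inv: "inv i v \<ge> 0 \<and> pw (inv i v) i = v" if "v \<ge> 0" for i v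
    using Kinv_nonneg[OF pw_Kinf that] f_Kinv[OF pw_Kinf that] by (simp add: inv_def Kinv_def)
  have range: "p2 kl \<le> inv i v \<and> inv i v \<le> p2 kh" if "v \<in> C" for i v
  proof -
    have v: "a \<le> v" "v \<le> b" "0 \<le> v" using a b that a0 by auto
    have "p2 kl \<le> inv i v"
    proof (rule ccontr)
      assume "\<not> ?thesis"
      then have "inv i v < p2 kl" by simp
      then have "pw (inv i v) i < pw (p2 kl) i" using pw_strict[of "inv i v" "p2 kl" i] inv[OF v(3)] by simp
      moreover have "pw (p2 kl) i \<le> a / 2" using pw_at K0 by (simp add: kl_def)
      ultimately show False using inv[OF v(3)] v a0 by simp
    qed
    moreover have "inv i v \<le> p2 kh"
    proof (rule ccontr)
      assume "\<not> ?thesis"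
      then have "pw (p2 kh) i < pw (inv i v) i" using pw_strict[of "p2 kh"] p2_pos[of kh] by simp
      moreover have "b + 1 \<le> pw (p2 kh) i" using pw_at K1 by (simp add: kh_def)
      ultimately show False using inv[OF v(3)] v by simp
    qed
    ultimately show ?thesis by blast
  qed
  have key: "m * \<bar>inv i v1 - inv i v2\<bar> \<le> \<bar>v1 - v2\<bar> \<and> \<bar>v1 - v2\<bar> \<le> M * \<bar>inv i v1 - inv i v2\<bar>"
    if "v1 \<in> C" "v2 \<in> C" for i v1 v2
  proof -
    have v0: "0 \<le> v1" "0 \<le> v2" using that C by auto
    have r1: "p2 kl \<le> inv i v1" "inv i v1 \<le> p2 kh" and r2: "p2 kl \<le> inv i v2" "inv i v2 \<le> p2 kh"
      using range that by auto
    show ?thesis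
    proof (cases "inv i v1 \<le> inv i v2")
      case True
      then have "m * (inv i v2 - inv i v1) \<le> v2 - v1 \<and> v2 - v1 \<le> M * (inv i v2 - inv i v1)"
        using mM(3) r1 r2 inv v0 by metis
      moreover have "0 \<le> m * (inv i v2 - inv i v1)" using mM(1) True by simp
      ultimately have "\<bar>v1 - v2\<bar> = v2 - v1" "\<bar>inv i v1 - inv i v2\<bar> = inv i v2 - inv i v1" using True by auto
      then show ?thesis using \<open>m * (inv i v2 - inv i v1) \<le> v2 - v1 \<and> _\<close> by simp
    next
      case False
      then have "m * (inv i v1 - inv i v2) \<le> v1 - v2 \<and> v1 - v2 \<le> M * (inv i v1 - inv i v2)"
        using mM(3) r1 r2 inv v0 by (metis nle_le)
      moreover have "0 \<le> m * (inv i v1 - inv i v2)" using mM(1) False by simp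
      ultimately have "\<bar>v1 - v2\<bar> = v1 - v2" "\<bar>inv i v1 - inv i v2\<bar> = inv i v1 - inv i v2" using False by auto
      then show ?thesis using \<open>m * (inv i v1 - inv i v2) \<le> v1 - v2 \<and> _\<close> by simp
    qed
  qed
  show ?thesis
  proof (intro exI conjI ballI allI)
    show "0 < 1 / M" "1 / M \<le> 1 / m" using mM by (auto simp: frac_le)
    fix r1 r2 i assume r: "r1 \<in> C" "r2 \<in> C"
    have k: "m * \<bar>inv i r1 - inv i r2\<bar> \<le> \<bar>r1 - r2\<bar>" "\<bar>r1 - r2\<bar> \<le> M * \<bar>inv i r1 - inv i r2\<bar>"
      using key[OF r] by auto
    show "1 / M * \<bar>r1 - r2\<bar> \<le> \<bar>the_inv_into {0..} (\<lambda>r. pw r i) r1 - the_inv_into {0..} (\<lambda>r. pw r i) r2\<bar>"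
      using k(2) mM by (simp add: inv_def[symmetric] field_simps)
    show "\<bar>the_inv_into {0..} (\<lambda>r. pw r i) r1 - the_inv_into {0..} (\<lambda>r. pw r i) r2\<bar> \<le> 1 / m * \<bar>r1 - r2\<bar>"
      using k(1) mM by (simp add: inv_def[symmetric] field_simps)
  qed
qed

end

lemma schain_pchain: "schain T y \<Longrightarrow> pchain y"
  unfolding schain_def pchain_def by blast

lemma two_pow_ge: "real n + 1 \<le> 2 ^ n"
proof (induction n)
  case (Suc n) then show ?case by simp
qed simp

context gop begin

context
  fixes \<rho>2 :: "real \<Rightarrow> real" and y :: "int \<Rightarrow> 'i \<Rightarrow> real"
  assumes r2: "class_Kinf \<rho>2" and sc: "schain (GR \<rho>2) y"
begin

interpretation pc: pchain y using schain_pchain[OF sc] .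

abbreviation T where "T \<equiv> GR \<rho>2"

lemma r2K: "class_K \<rho>2" using r2 classKinf_K by blast

lemma Y3: "T (y (k + 1)) i \<le> y k i" using sc unfolding schain_def by blast

lemma ynn: "nonneg (y k)" using pc.P1 by (simp add: nonneg_def less_imp_le)

definition zc :: "int \<Rightarrow> 'i \<Rightarrow> real" where "zc k = (\<lambda>_. Min (range (y (k - 1))))"

lemma Min_y: "Min (range (y k)) \<le> y k i" by (rule Min_le) auto

lemma Min_y_in: "\<exists>i. Min (range (y k)) = y k i"
proof -
  have "Min (range (y k)) \<in> range (y k)" by (rule Min_in) auto
  then obtain i where "Min (range (y k)) = y k i" by blast
  then show ?thesis by blast
qed

lemma zc_pchain: "pchain zc"
proof -
  have "\<forall>k i. 0 < zc k i" unfolding zc_def using Min_y_in pc.P1 by metis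
  moreover have "\<forall>k i. zc k i < zc (k + 1) i"
  proof (intro allI)
    fix k i
    obtain j where j: "Min (range (y k)) = y k j" using Min_y_in by blast
    have "Min (range (y (k - 1))) \<le> y (k - 1) j" by (rule Min_y)
    also have "\<dots> < y k j" using pc.P2[rule_format, of "k - 1" j] by simp
    finally show "zc k i < zc (k + 1) i" unfolding zc_def using j by simp
  qed
  moreover have "\<forall>e>0. \<exists>K. \<forall>k\<le>K. \<forall>i. zc k i \<le> e"
  proof (intro allI impI)
    fix e :: real assume "0 < e"
    then obtain K where K: "\<forall>k\<le>K. \<forall>i. y k i \<le> e" using pc.P4 by blast
    show "\<exists>K. \<forall>k\<le>K. \<forall>i. zc k i \<le> e"
    proof (intro exI[of _ K] allI impI)
      fix k i assume "k \<le> K"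
      have "Min (range (y (k - 1))) \<le> y (k - 1) undefined" by (rule Min_y)
      also have "\<dots> \<le> e" using K \<open>k \<le> K\<close> by simp
      finally show "zc k i \<le> e" by (simp add: zc_def)
    qed
  qed
  moreover have "\<forall>B. \<exists>K. \<forall>k\<ge>K. \<forall>i. B \<le> zc k i"
  proof
    fix B
    obtain K where K: "\<forall>k\<ge>K. \<forall>i. B \<le> y k i" using pc.P5 by blast
    show "\<exists>K. \<forall>k\<ge>K. \<forall>i. B \<le> zc k i"
    proof (intro exI[of _ "K + 1"] allI impI)
      fix k i assume "K + 1 \<le> k"
      obtain j where j: "Min (range (y (k - 1))) = y (k - 1) j" using Min_y_in by blast
      then show "B \<le> zc k i" using K \<open>K + 1 \<le> k\<close> by (simp add: zc_def)
    qed
  qed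
  ultimately show ?thesis unfolding pchain_def by blast
qed

interpretation pz: pchain zc by (rule zc_pchain)

definition alpha :: "real \<Rightarrow> real" where "alpha r = pz.pw r undefined"
definition phimax :: "real \<Rightarrow> real" where "phimax r = (\<Sum>i\<in>UNIV. pc.pw r i)"

lemma alpha_Kinf: "class_Kinf alpha"
  unfolding alpha_def using pz.pw_Kinf .

lemma phimax_Kinf: "class_Kinf phimax"
  unfolding phimax_def using Kinf_sum[of "\<lambda>i r. pc.pw r i"] pc.pw_Kinf by blast

lemma alpha_le: "r \<ge> 0 \<Longrightarrow> alpha r \<le> pc.pw r i"
proof -
  assume r: "r \<ge> 0"
  show ?thesis
  proof (cases "r = 0")
    case True then show ?thesis by (simp add: alpha_def pz.pw0 pc.pw0)
  next
    case False
    then have rp: "0 < r" using r by simp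
    define k where "k = \<lfloor>log 2 r\<rfloor>"
    have b: "p2 k \<le> r" "r \<le> p2 (k + 1)" using flog[OF rp] by (auto simp: k_def less_imp_le)
    have "alpha r \<le> zc (k + 1) undefined" using pz.bracket[OF b] by (simp add: alpha_def)
    also have "\<dots> = Min (range (y k))" by (simp add: zc_def)
    also have "\<dots> \<le> y k i" by (rule Min_y)
    also have "\<dots> \<le> pc.pw r i" using pc.bracket[OF b] by blast
    finally show ?thesis .
  qed
qed

lemma le_phimax: "pc.pw r i \<le> phimax r"
  unfolding phimax_def by (rule member_le_sum) (auto simp: pc.pw_nonneg)

lemma pw_decay: "r \<ge> 0 \<Longrightarrow> T (pc.pw r) i \<le> pc.pw r i"
proof -
  assume r: "r \<ge> 0"
  show ?thesis
  proof (cases "r = 0")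
    case True
    then have "pc.pw r = (\<lambda>_. 0)" by (auto simp: pc.pw0)
    then show ?thesis using GR_zero[OF r2K] by simp
  next
    case False
    then have rp: "0 < r" using r by simp
    define k where "k = \<lfloor>log 2 r\<rfloor>"
    have b: "p2 k \<le> r" "r \<le> p2 (k + 1)" using flog[OF rp] by (auto simp: k_def less_imp_le)
    have nn: "nonneg (pc.pw r)" using pc.pw_nonneg by (simp add: nonneg_def)
    have "T (pc.pw r) i \<le> T (y (k + 1)) i" using GR_mono[OF r2K nn] pc.bracket[OF b] by blast
    also have "\<dots> \<le> y k i" by (rule Y3)
    also have "\<dots> \<le> pc.pw r i" using pc.bracket[OF b] by blast
    finally show ?thesis .
  qed
qed

lemma path_ok: "path_strict_decay Iset \<gamma> \<mu> pc.pw"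
  unfolding path_strict_decay_def
proof (intro conjI)
  show "\<exists>\<rho>. class_Kinf \<rho> \<and> (\<forall>r\<ge>0. \<forall>i. Gam_rho \<rho> Iset \<gamma> \<mu> (pc.pw r) i \<le> pc.pw r i)"
    using r2 pw_decay by blast
  show "\<exists>\<phi>min \<phi>max. class_Kinf \<phi>min \<and> class_Kinf \<phi>max \<and> (\<forall>r\<ge>0. \<forall>i. \<phi>min r \<le> pc.pw r i \<and> pc.pw r i \<le> \<phi>max r)"
    using alpha_Kinf phimax_Kinf alpha_le le_phimax by blast
  show "\<forall>i. class_Kinf (\<lambda>r. pc.pw r i)" using pc.pw_Kinf by blast
  show "\<forall>K. compact K \<longrightarrow> K \<subseteq> {0<..} \<longrightarrow> (\<exists>l L. 0 < l \<and> l \<le> L \<and> (\<forall>r1\<in>K. \<forall>r2\<in>K. \<forall>i.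
           l * \<bar>r1 - r2\<bar> \<le> \<bar>the_inv_into {0..} (\<lambda>r. pc.pw r i) r1 - the_inv_into {0..} (\<lambda>r. pc.pw r i) r2\<bar>
         \<and> \<bar>the_inv_into {0..} (\<lambda>r. pc.pw r i) r1 - the_inv_into {0..} (\<lambda>r. pc.pw r i) r2\<bar> \<le> L * \<bar>r1 - r2\<bar>))"
    using pc.pw_inv_lip by blast
qed

lemma descent:
  assumes s: "nonneg s" "\<forall>i. s i \<le> max (b i) (T s i)" and b: "\<forall>i. b i \<le> y j i"
  shows "j \<le> k \<Longrightarrow> \<forall>i. s i \<le> y k i \<Longrightarrow> \<forall>i. s i \<le> y j i"
proof (induction k rule: int_ge_induct)
  case base then show ?case by blast
next
  case (step k)
  have "s i \<le> y k i" for i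
  proof -
    have "T s i \<le> T (y (k + 1)) i" using GR_mono[OF r2K s(1)] step.prems by blast
    also have "\<dots> \<le> y k i" by (rule Y3)
    finally have 1: "T s i \<le> y k i" .
    have "b i \<le> y k i" using b pc.y_mono[OF step.hyps] order_trans by blast
    then have "max (b i) (T s i) \<le> y k i" using 1 by (rule max.boundedI)
    then show ?thesis using s(2) order_trans by blast
  qed
  then show ?case using step.IH by blast
qed

lemma below: "\<exists>k\<ge>j. \<forall>i. s i \<le> y k i"
proof -
  obtain K where K: "\<forall>k\<ge>K. \<forall>i. supn s \<le> y k i" using pc.P5 by blast
  have "s i \<le> y (max K j) i" for i
  proof -
    have "supn s \<le> y (max K j) i" using K by simp
    then show ?thesis using supn_ge'[of s i] by linarith
  qed
  then show ?thesis by (intro exI[of _ "max K j"]) auto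
qed

lemma q_facts:
  assumes R: "0 < R"
  shows "0 < Kinv alpha R \<and> alpha (Kinv alpha R) = R"
proof -
  have "alpha (Kinv alpha R) = R" using f_Kinv[OF alpha_Kinf] R by simp
  moreover have "0 \<le> Kinv alpha R" using Kinv_nonneg[OF alpha_Kinf] R by simp
  moreover have "Kinv alpha R \<noteq> 0"
  proof
    assume "Kinv alpha R = 0"
    then have "alpha (Kinv alpha R) = 0" using classK_zero[OF classKinf_K[OF alpha_Kinf]] by simp
    then show False using calculation R by simp
  qed
  ultimately show ?thesis by simp
qed

lemma bound_by_y:
  assumes R: "0 < R" and b: "nonneg b" "supn b \<le> R"
  shows "\<forall>i. b i \<le> y (\<lfloor>log 2 (Kinv alpha R)\<rfloor> + 1) i"
proof
  fix i
  define q where "q = Kinv alpha R"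
  have q: "0 < q" "alpha q = R" using q_facts[OF R] by (auto simp: q_def)
  define k where "k = \<lfloor>log 2 q\<rfloor>"
  have bk: "p2 k \<le> q" "q \<le> p2 (k + 1)" using flog[OF q(1)] by (auto simp: k_def less_imp_le)
  have "b i \<le> R" using b supn_ge' order_trans by blast
  also have "\<dots> = alpha q" using q by simp
  also have "\<dots> \<le> pc.pw q i" using alpha_le[of q i] q by simp
  also have "\<dots> \<le> y (k + 1) i" using pc.bracket[OF bk] by blast
  finally show "b i \<le> y (\<lfloor>log 2 (Kinv alpha R)\<rfloor> + 1) i" by (simp add: k_def q_def)
qed

lemma phi_Kinf: "class_Kinf (\<lambda>r. phimax (c * Kinv alpha r))" if "c > 0"
  using Kinf_comp[OF Kinf_scale[OF phimax_Kinf that] Kinv_Kinf[OF alpha_Kinf]] by simp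

lemma supn_le_y: "nonneg s \<Longrightarrow> \<forall>i. s i \<le> y k i \<Longrightarrow> supn s \<le> phimax (p2 k)"
proof -
  assume s: "nonneg s" "\<forall>i. s i \<le> y k i"
  obtain i where i: "supn s = \<bar>s i\<bar>" using supn_attained by blast
  then have "supn s = s i" using s by (simp add: nonneg_def)
  also have "\<dots> \<le> y k i" using s by blast
  also have "\<dots> = pc.pw (p2 k) i" by (simp add: pc.pw_at)
  also have "\<dots> \<le> phimax (p2 k)" by (rule le_phimax)
  finally show ?thesis .
qed

lemma MBI_ok: "oplus_MBI T"
  unfolding oplus_MBI_def
proof (intro exI conjI allI impI)
  show "class_Kinf (\<lambda>r. phimax (2 * Kinv alpha r))" using phi_Kinf[of 2] by simp
  fix s b :: "'i \<Rightarrow> real"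
  assume s: "nonneg s" and b: "nonneg b" and sb: "\<forall>i. s i \<le> vmax b (T s) i"
  have sb': "\<forall>i. s i \<le> max (b i) (T s i)" using sb by (simp add: vmax_def)
  have phi0: "0 \<le> phimax (2 * Kinv alpha r)" if "r \<ge> 0" for r
    using classK_nonneg[OF classKinf_K[OF phimax_Kinf]] Kinv_nonneg[OF alpha_Kinf that] by simp
  show "supn s \<le> phimax (2 * Kinv alpha (supn b))"
  proof (cases "supn b = 0")
    case True
    then have b0: "b = (\<lambda>_. 0)" by (simp add: supn_zero_iff)
    have "s i \<le> e" if ep: "e > 0" for i e
    proof -
      obtain K where K: "\<forall>k\<le>K. \<forall>i. y k i \<le> e" using pc.P4[rule_format, OF ep] by blast
      have "\<forall>i. b i \<le> y K i" using b0 pc.P1 by (simp add: less_imp_le)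
      moreover obtain k where "K \<le> k" "\<forall>i. s i \<le> y k i" using below by blast
      ultimately have "\<forall>i. s i \<le> y K i" using descent[OF s sb'] by blast
      then show ?thesis using K by (meson order_refl order_trans)
    qed
    then have "s i \<le> 0" for i using field_le_epsilon[of "s i" 0] by simp
    then have "supn s \<le> 0" using s by (simp add: supn_le_iff nonneg_def)
    then show ?thesis using phi0[of "supn b"] by (simp add: supn_nonneg)
  next
    case False
    then have R: "0 < supn b" using supn_nonneg[of b] by simp
    define q where "q = Kinv alpha (supn b)"
    have q: "0 < q" using q_facts[OF R] by (simp add: q_def)
    define k where "k = \<lfloor>log 2 q\<rfloor>"
    have bk: "p2 k \<le> q" using flog[OF q] by (simp add: k_def)
    have by': "\<forall>i. b i \<le> y (k + 1) i" using bound_by_y[OF R b] by (simp add: k_def q_def)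
    obtain k' where "k + 1 \<le> k'" "\<forall>i. s i \<le> y k' i" using below by blast
    then have "\<forall>i. s i \<le> y (k + 1) i" using descent[OF s sb' by'] by blast
    then have "supn s \<le> phimax (p2 (k + 1))" using supn_le_y s by blast
    also have "\<dots> \<le> phimax (2 * q)"
      using classK_mono[OF classKinf_K[OF phimax_Kinf], of "p2 (k + 1)" "2 * q"] bk p2_pos[of "k + 1"]
      by (simp add: p2_Suc)
    finally show ?thesis by (simp add: q_def)
  qed
qed

lemma T_pow_nonneg: "nonneg s \<Longrightarrow> nonneg ((T ^^ n) s)"
  by (induction n) (auto intro: GR_nonneg'[OF r2K])

lemma T_pow_zero: "(T ^^ n) (\<lambda>_. 0) = (\<lambda>_. 0)"
  by (induction n) (auto simp: GR_zero[OF r2K])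

lemma p2_shift: "p2 (k + 1 - int n) = p2 k * 2 / 2 ^ n"
proof -
  have "p2 (k + 1 - int n) = 2 powr (real_of_int k + 1 - real n)" by (simp add: p2_def)
  also have "\<dots> = 2 powr (real_of_int k) * 2 powr 1 / 2 powr (real n)"
    by (simp add: powr_diff powr_add)
  also have "\<dots> = p2 k * 2 / 2 ^ n" by (simp add: p2_def powr_realpow)
  finally show ?thesis .
qed

definition beta :: "real \<Rightarrow> real \<Rightarrow> real" where
  "beta r t = phimax (2 / (t + 1) * Kinv alpha r)"

lemma UGAS_bound:
  assumes s: "nonneg s"
  shows "supn ((T ^^ n) s) \<le> beta (supn s) (real n)"
proof (cases "supn s = 0")
  case True
  then have "s = (\<lambda>_. 0)" by (simp add: supn_zero_iff)
  then have "supn ((T ^^ n) s) = 0" by (simp add: T_pow_zero supn_const)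
  moreover have "0 \<le> beta (supn s) (real n)"
  proof -
    have "0 \<le> Kinv alpha (supn s)" using Kinv_nonneg[OF alpha_Kinf supn_nonneg] .
    then have "0 \<le> 2 / (real n + 1) * Kinv alpha (supn s)" by simp
    then show ?thesis unfolding beta_def using classK_nonneg[OF classKinf_K[OF phimax_Kinf]] by blast
  qed
  ultimately show ?thesis by simp
next
  case False
  then have R: "0 < supn s" using supn_nonneg[of s] by simp
  define q where "q = Kinv alpha (supn s)"
  have q: "0 < q" using q_facts[OF R] by (simp add: q_def)
  define k where "k = \<lfloor>log 2 q\<rfloor>"
  have bk: "p2 k \<le> q" using flog[OF q] by (simp add: k_def)
  have s1: "\<forall>i. s i \<le> y (k + 1) i" using bound_by_y[OF R s] by (simp add: k_def q_def)
  have it: "\<forall>i. (T ^^ m) s i \<le> y (k + 1 - int m) i" for m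
  proof (induction m)
    case 0 then show ?case using s1 by simp
  next
    case (Suc m)
    show ?case
    proof
      fix i
      have "(T ^^ Suc m) s i = T ((T ^^ m) s) i" by simp
      also have "\<dots> \<le> T (y (k + 1 - int m)) i" using GR_mono[OF r2K T_pow_nonneg[OF s]] Suc by blast
      also have "\<dots> \<le> y (k + 1 - int m - 1) i"
      proof -
        have "T (y ((k - int m) + 1)) i \<le> y (k - int m) i" by (rule Y3)
        moreover have "(k - int m) + 1 = k + 1 - int m" "k + 1 - int m - 1 = k - int m" by simp_all
        ultimately show ?thesis by simp
      qed
      finally show "(T ^^ Suc m) s i \<le> y (k + 1 - int (Suc m)) i" by (simp add: algebra_simps)
    qed
  qed
  have "supn ((T ^^ n) s) \<le> phimax (p2 (k + 1 - int n))" using supn_le_y[OF T_pow_nonneg[OF s] it] .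
  also have "\<dots> \<le> phimax (2 / (real n + 1) * q)"
  proof -
    have "p2 (k + 1 - int n) = p2 k * 2 / 2 ^ n" by (rule p2_shift)
    also have "\<dots> \<le> q * 2 / 2 ^ n" using bk by (simp add: divide_right_mono)
    also have "\<dots> \<le> q * 2 / (real n + 1)"
      using two_pow_ge[of n] q by (intro divide_left_mono) auto
    finally have "p2 (k + 1 - int n) \<le> 2 / (real n + 1) * q" by (simp add: mult.commute)
    then show ?thesis using classK_mono[OF classKinf_K[OF phimax_Kinf]] p2_pos[of "k + 1 - int n"] by simp
  qed
  finally show ?thesis by (simp add: beta_def q_def)
qed

lemma beta_KL: "class_KL beta"
  unfolding class_KL_def
proof (intro conjI)
  have cK: "continuous_on {0..} (Kinv alpha)" using classK_cont[OF classKinf_K[OF Kinv_Kinf[OF alpha_Kinf]]] .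
  have cP: "continuous_on {0..} phimax" using classK_cont[OF classKinf_K[OF phimax_Kinf]] .
  have f1: "continuous_on ({0..} \<times> {0..}) (\<lambda>p. 2 / (snd p + 1) * Kinv alpha (fst p))"
  proof (intro continuous_intros)
    show "continuous_on ({0..} \<times> {0..}) (\<lambda>p. Kinv alpha (fst p))"
      by (rule continuous_on_compose2[OF cK continuous_on_fst]) auto
  qed auto
  have "continuous_on ({0..} \<times> {0..}) (\<lambda>p. phimax (2 / (snd p + 1) * Kinv alpha (fst p)))"
  proof (rule continuous_on_compose2[OF cP f1])
    show "(\<lambda>p. 2 / (snd p + 1) * Kinv alpha (fst p)) ` ({0..} \<times> {0..}) \<subseteq> {0..}"
    proof clarsimp
      fix a b :: real assume ab: "0 \<le> a" "0 \<le> b"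
      have "0 \<le> Kinv alpha a" using Kinv_nonneg[OF alpha_Kinf ab(1)] .
      then show "0 \<le> 2 * Kinv alpha a / (b + 1)" using ab by simp
    qed
  qed
  then show "continuous_on ({0..} \<times> {0..}) (\<lambda>(r, t). beta r t)"
    by (simp add: beta_def case_prod_beta)
  show "\<forall>t\<ge>0. class_K (\<lambda>r. beta r t)"
  proof (intro allI impI)
    fix t :: real assume t: "0 \<le> t"
    have "class_Kinf (\<lambda>r. phimax (2 / (t + 1) * Kinv alpha r))" using phi_Kinf[of "2 / (t + 1)"] t by simp
    then show "class_K (\<lambda>r. beta r t)" by (simp add: beta_def classKinf_K)
  qed
  show "\<forall>r>0. continuous_on {0..} (beta r) \<and> (\<forall>t1 t2. 0 \<le> t1 \<longrightarrow> t1 < t2 \<longrightarrow> beta r t2 < beta r t1) \<and>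
              (beta r \<longlongrightarrow> 0) at_top"
  proof (intro allI impI)
    fix r :: real assume r: "0 < r"
    define q where "q = Kinv alpha r"
    have q: "0 < q" using q_facts[OF r] by (simp add: q_def)
    have "continuous_on {0..} (\<lambda>t. 2 / (t + 1) * q)" by (intro continuous_intros) auto
    then have h1: "continuous_on {0..} (beta r)"
      unfolding beta_def q_def[symmetric]
      by (rule continuous_on_compose2[OF cP]) (use q in \<open>auto\<close>)
    have h2: "\<forall>t1 t2. 0 \<le> t1 \<longrightarrow> t1 < t2 \<longrightarrow> beta r t2 < beta r t1"
    proof (intro allI impI)
      fix t1 t2 :: real assume tt: "0 \<le> t1" "t1 < t2"
      have "2 / (t2 + 1) * q < 2 / (t1 + 1) * q"
        using tt q by (intro mult_strict_right_mono divide_strict_left_mono) auto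
      moreover have "0 \<le> 2 / (t2 + 1) * q" using tt q by simp
      ultimately show "beta r t2 < beta r t1"
        unfolding beta_def q_def[symmetric] using classK_strict[OF classKinf_K[OF phimax_Kinf]] by blast
    qed
    have lim: "((\<lambda>t. 2 / (t + 1) * q) \<longlongrightarrow> 0) at_top"
    proof -
      have "filterlim (\<lambda>t::real. 1 + t) at_top at_top" by (rule filterlim_tendsto_add_at_top[OF tendsto_const filterlim_ident])
      then have "filterlim (\<lambda>t::real. t + 1) at_top at_top" by (simp add: add.commute)
      then have "((\<lambda>t::real. 2 / (t + 1)) \<longlongrightarrow> 0) at_top"
        using tendsto_divide_0[OF tendsto_const[of 2] filterlim_at_top_imp_at_infinity] by blast
      then show ?thesis by (rule tendsto_mult_left_zero)
    qed
    have ev: "eventually (\<lambda>t. 2 / (t + 1) * q \<in> {0..}) at_top"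
      using q by (auto simp: eventually_at_top_linorder intro!: exI[of _ 0])
    have "((\<lambda>t. phimax (2 / (t + 1) * q)) \<longlongrightarrow> phimax 0) at_top"
      using continuous_on_tendsto_compose[OF cP lim _ ev] by (simp add: o_def)
    then have h3: "(beta r \<longlongrightarrow> 0) at_top"
      unfolding beta_def q_def[symmetric] using classK_zero[OF classKinf_K[OF phimax_Kinf]] by simp
    show "continuous_on {0..} (beta r) \<and> (\<forall>t1 t2. 0 \<le> t1 \<longrightarrow> t1 < t2 \<longrightarrow> beta r t2 < beta r t1) \<and>
              (beta r \<longlongrightarrow> 0) at_top" using h1 h2 h3 by blast
  qed
qed

lemma UGAS_ok: "UGAS T"
  unfolding UGAS_def using beta_KL UGAS_bound by blast

lemma UNJI_ok: "uniform_NJI Iset T"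
proof -
  define E where "E = edges Iset"
  define anc where "anc i = {j. \<exists>k. (j, i) \<in> E ^^ k}" for i
  define ln where "ln p = (LEAST k. (snd p, fst p) \<in> E ^^ k)" for p :: "'i \<times> 'i"
  define n where "n = Max (range ln)"
  have anc_nb: "j \<in> in_nbhd Iset i n" if "j \<in> anc i" for i j
  proof -
    have "\<exists>k. (j, i) \<in> E ^^ k" using that by (simp add: anc_def)
    then have "(j, i) \<in> E ^^ (LEAST k. (j, i) \<in> E ^^ k)" by (rule LeastI_ex)
    then have "(j, i) \<in> E ^^ ln (i, j)" unfolding ln_def by simp
    moreover have "ln (i, j) \<le> n" unfolding n_def by (rule Max_ge) auto
    ultimately show ?thesis unfolding in_nbhd_def E_def by blast
  qed
  have anc_self: "i \<in> anc i" for i unfolding anc_def by (intro CollectI exI[of _ 0]) simp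
  have anc_pred: "l \<in> anc i" if a: "j \<in> anc i" "l \<in> Iset j" for i j l
  proof -
    obtain k where "(j, i) \<in> E ^^ k" using a by (auto simp: anc_def)
    moreover have "(l, j) \<in> E" using a by (simp add: E_def edges_def)
    ultimately have "(l, i) \<in> E ^^ Suc k" by (rule relpow_Suc_I2[rotated])
    then show ?thesis unfolding anc_def by blast
  qed
  show ?thesis
    unfolding uniform_NJI_def
  proof (intro allI impI)
    fix r e :: real assume r: "0 < r" and e: "0 < e"
    obtain K0 where K0: "\<forall>k\<le>K0. \<forall>i. y k i \<le> e / 2" using pc.P4 e by (meson half_gt_zero)
    define dl where "dl = Min (range (y K0))"
    have dl: "0 < dl" unfolding dl_def using Min_y_in pc.P1 by metis
    show "\<exists>n. \<exists>\<delta>>0. \<forall>s i. nonneg s \<longrightarrow> e \<le> s i \<longrightarrow> supn s \<le> r \<longrightarrow>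
            (\<exists>j\<in>in_nbhd Iset i n. \<delta> \<le> s j \<and> T s j < s j)"
    proof (intro exI[of _ n] exI[of _ dl] conjI allI impI)
      show "0 < dl" by (rule dl)
      fix s :: "'i \<Rightarrow> real" and i :: 'i
      assume s: "nonneg s" and si: "e \<le> s i" and sr: "supn s \<le> r"
      define s' where "s' = restr (anc i) s"
      have s'nn: "nonneg s'" using s by (simp add: s'_def restr_def nonneg_def)
      have s'i: "s' i = s i" using anc_self by (simp add: s'_def restr_def)
      define Ks where "Ks = {k. \<forall>j. s' j \<le> y k j}"
      have Kgt: "K0 < k" if "k \<in> Ks" for k
      proof (rule ccontr)
        assume "\<not> K0 < k"
        then have "y k i \<le> e / 2" using K0 by simp
        moreover have "s' i \<le> y k i" using that by (simp add: Ks_def)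
        ultimately show False using si s'i e by linarith
      qed
      obtain k1 where k1: "\<forall>j. s' j \<le> y k1 j"
      proof -
        obtain k where "K0 \<le> k" "\<forall>j. s' j \<le> y k j" using below[of K0 s'] by blast
        then show ?thesis using that by blast
      qed
      then have k1K: "k1 \<in> Ks" by (simp add: Ks_def)
      define m0 where "m0 = (LEAST m::nat. K0 + 1 + int m \<in> Ks)"
      have ex: "\<exists>m::nat. K0 + 1 + int m \<in> Ks"
        using k1K Kgt[OF k1K] by (intro exI[of _ "nat (k1 - K0 - 1)"]) simp
      define km where "km = K0 + 1 + int m0"
      have kmK: "km \<in> Ks" unfolding km_def m0_def using LeastI_ex[OF ex] .
      have kmprev: "km - 1 \<notin> Ks"
      proof (cases m0)
        case 0
        then have "km - 1 = K0" by (simp add: km_def)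
        then show ?thesis using Kgt by blast
      next
        case (Suc m')
        then have "km - 1 = K0 + 1 + int m'" by (simp add: km_def)
        moreover have "K0 + 1 + int m' \<notin> Ks" using not_less_Least[of m' "\<lambda>m. K0 + 1 + int m \<in> Ks"] Suc
          by (simp add: m0_def)
        ultimately show ?thesis by (simp add: add.commute add.left_commute)
      qed
      then obtain j where j: "y (km - 1) j < s' j" by (auto simp: Ks_def not_le)
      have jA: "j \<in> anc i"
      proof (rule ccontr)
        assume "j \<notin> anc i"
        then have "s' j = 0" by (simp add: s'_def restr_def)
        then show False using j pc.P1 by (metis less_asym)
      qed
      have sj: "s' j = s j" using jA by (simp add: s'_def restr_def)
      show "\<exists>j\<in>in_nbhd Iset i n. dl \<le> s j \<and> T s j < s j"
      proof (intro bexI conjI)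
        show "j \<in> in_nbhd Iset i n" using anc_nb jA by blast
        have "K0 \<le> km - 1" by (simp add: km_def)
        then have "y K0 j \<le> y (km - 1) j" by (rule pc.y_mono)
        moreover have "dl \<le> y K0 j" unfolding dl_def by (rule Min_y)
        ultimately show "dl \<le> s j" using j sj by linarith
        have "T s j = T s' j"
          by (rule GR_local) (use anc_pred jA in \<open>auto simp: s'_def restr_def\<close>)
        also have "\<dots> \<le> T (y km) j" using GR_mono[OF r2K s'nn] kmK by (auto simp: Ks_def)
        also have "\<dots> \<le> y (km - 1) j" using Y3[of "km - 1" j] by simp
        also have "\<dots> < s j" using j sj by simp
        finally show "T s j < s j" .
      qed
    qed
  qed
qed

end

end

lemma Kinf_half: "class_Kinf f \<Longrightarrow> class_Kinf (\<lambda>x. f x / 2)"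
proof -
  assume f: "class_Kinf f"
  have K: "class_K f" using f classKinf_K by blast
  have "continuous_on {0..} (\<lambda>x. f x / 2)"
  proof -
    have "continuous_on {0..} (\<lambda>x. (1/2) * f x)" by (rule continuous_on_mult_left[OF classK_cont[OF K]])
    then show ?thesis by (simp add: mult.commute)
  qed
  moreover have "strict_mono_on {0..} (\<lambda>x. f x / 2)"
    by (rule strict_mono_onI) (use classK_strict[OF K] in auto)
  moreover have "f 0 / 2 = 0" using classK_zero[OF K] by simp
  moreover have "\<exists>r\<ge>0. M < f r / 2" for M
  proof -
    obtain r where "r \<ge> 0" "2 * M < f r" using classKinf_unbdd[OF f] by blast
    then show ?thesis by (intro exI[of _ r]) auto
  qed
  ultimately show ?thesis unfolding class_Kinf_def class_K_def by blast
qed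

context gop begin

lemma b_to_a:
  assumes rK: "class_Kinf \<rho>" and u: "uniform_NJI Iset (GR \<rho>)"
  shows "NJI (GR \<rho>)"
  unfolding NJI_def
proof (intro allI impI notI)
  fix s assume sp: "pos_vec s" and le: "\<forall>i. s i \<le> GR \<rho> s i"
  have snn: "nonneg s" and s0: "s \<noteq> (\<lambda>_. 0)" using sp by (auto simp: pos_vec_def)
  obtain i0 where i0: "supn s = \<bar>s i0\<bar>" using supn_attained by blast
  have si0: "s i0 = supn s" using i0 snn by (simp add: nonneg_def)
  have pos: "0 < supn s" using pos_supn[OF snn s0] .
  have u': "\<forall>r>0. \<forall>\<epsilon>>0. \<exists>n::nat. \<exists>\<delta>>0. \<forall>s i. nonneg s \<longrightarrow> \<epsilon> \<le> s i \<longrightarrow> supn s \<le> r \<longrightarrow>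
      (\<exists>j\<in>in_nbhd Iset i n. \<delta> \<le> s j \<and> GR \<rho> s j < s j)" using u unfolding uniform_NJI_def .
  have pos': "0 < s i0" using pos si0 by simp
  obtain n dl where "dl > 0" and H: "\<forall>s' i. nonneg s' \<longrightarrow> s i0 \<le> s' i \<longrightarrow> supn s' \<le> supn s \<longrightarrow>
      (\<exists>j\<in>in_nbhd Iset i n. dl \<le> s' j \<and> GR \<rho> s' j < s' j)"
    using u'[rule_format, OF pos pos'] by blast
  have "\<exists>j\<in>in_nbhd Iset i0 n. dl \<le> s j \<and> GR \<rho> s j < s j" using H snn by blast
  then obtain j where "GR \<rho> s j < s j" by blast
  then show False using le by (meson not_le)
qed

lemma c_to_a:
  assumes rK: "class_Kinf \<rho>" and m: "oplus_MBI (GR \<rho>)"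
  shows "NJI (GR \<rho>)"
  unfolding NJI_def
proof (intro allI impI notI)
  fix s assume sp: "pos_vec s" and le: "\<forall>i. s i \<le> GR \<rho> s i"
  have snn: "nonneg s" and s0: "s \<noteq> (\<lambda>_. 0)" using sp by (auto simp: pos_vec_def)
  obtain \<phi> where phi: "class_Kinf \<phi>" and H: "\<forall>s b. nonneg s \<longrightarrow> nonneg b \<longrightarrow>
      (\<forall>i. s i \<le> vmax b (GR \<rho> s) i) \<longrightarrow> supn s \<le> \<phi> (supn b)"
    using m unfolding oplus_MBI_def by blast
  have "\<forall>i. s i \<le> vmax (\<lambda>_. 0) (GR \<rho> s) i"
  proof
    fix i
    have "s i \<le> GR \<rho> s i" using le by blast
    then show "s i \<le> vmax (\<lambda>_. 0) (GR \<rho> s) i" by (simp add: vmax_def)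
  qed
  moreover have "nonneg (\<lambda>_::'i. 0::real)" by simp
  ultimately have "supn s \<le> \<phi> (supn (\<lambda>_::'i. 0::real))" using H[rule_format, of s "\<lambda>_. 0"] snn by blast
  then have "supn s \<le> 0" using classK_zero[OF classKinf_K[OF phi]] by (simp add: supn_const)
  then show False using pos_supn[OF snn s0] by simp
qed

lemma e_to_a:
  assumes rK: "class_Kinf \<rho>" and u: "UGAS (GR \<rho>)"
  shows "NJI (GR \<rho>)"
  unfolding NJI_def
proof (intro allI impI notI)
  fix s assume sp: "pos_vec s" and le: "\<forall>i. s i \<le> GR \<rho> s i"
  have snn: "nonneg s" and s0: "s \<noteq> (\<lambda>_. 0)" using sp by (auto simp: pos_vec_def)
  have rK': "class_K \<rho>" using rK classKinf_K by blast
  obtain \<beta> where b: "class_KL \<beta>" and H: "\<forall>s n. nonneg s \<longrightarrow> supn ((GR \<rho> ^^ n) s) \<le> \<beta> (supn s) (real n)"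
    using u unfolding UGAS_def by blast
  have nn: "nonneg ((GR \<rho> ^^ n) s)" for n by (induction n) (auto intro: GR_nonneg'[OF rK'] snn)
  have it: "\<forall>i. s i \<le> (GR \<rho> ^^ n) s i" for n
  proof (induction n)
    case 0 then show ?case by simp
  next
    case (Suc n)
    show ?case
    proof
      fix i
      have "s i \<le> GR \<rho> s i" using le by blast
      also have "\<dots> \<le> GR \<rho> ((GR \<rho> ^^ n) s) i" using GR_mono[OF rK' snn] Suc by blast
      finally show "s i \<le> (GR \<rho> ^^ Suc n) s i" by simp
    qed
  qed
  define r where "r = supn s"
  have r: "0 < r" using pos_supn[OF snn s0] by (simp add: r_def)
  have "\<forall>n. r \<le> \<beta> r (real n)"
  proof
    fix n
    have "r \<le> supn ((GR \<rho> ^^ n) s)" unfolding r_def using supn_mono[OF snn it] .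
    also have "\<dots> \<le> \<beta> r (real n)" using H snn by (simp add: r_def)
    finally show "r \<le> \<beta> r (real n)" .
  qed
  moreover have "(\<lambda>n. \<beta> r (real n)) \<longlonglongrightarrow> 0"
  proof -
    have "(\<beta> r \<longlongrightarrow> 0) at_top" using b r unfolding class_KL_def by blast
    then show ?thesis using filterlim_compose[OF _ filterlim_real_sequentially] by blast
  qed
  ultimately have "r \<le> 0" by (intro LIMSEQ_le_const) auto
  then show False using r by simp
qed

lemma d_to_a:
  assumes p: "path_strict_decay Iset \<gamma> \<mu> \<sigma>"
  shows "\<exists>\<rho>. class_Kinf \<rho> \<and> NJI (GR \<rho>)"
proof -
  obtain \<rho> where rK: "class_Kinf \<rho>" and dec: "\<forall>r\<ge>0. \<forall>i. GR \<rho> (\<sigma> r) i \<le> \<sigma> r i"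
    using p[unfolded path_strict_decay_def, THEN conjunct1] by blast
  have sK: "\<forall>i. class_Kinf (\<lambda>r. \<sigma> r i)"
    using p[unfolded path_strict_decay_def, THEN conjunct2, THEN conjunct2, THEN conjunct1] .
  have rK': "class_K \<rho>" using rK classKinf_K by blast
  define rh where "rh x = \<rho> x / 2" for x
  have rhK: "class_Kinf rh" unfolding rh_def using Kinf_half[OF rK] .
  have "NJI (GR rh)"
    unfolding NJI_def
  proof (intro allI impI notI)
    fix s assume sp: "pos_vec s" and le: "\<forall>i. s i \<le> GR rh s i"
    have snn: "nonneg s" and s0: "s \<noteq> (\<lambda>_. 0)" using sp by (auto simp: pos_vec_def)
    define t where "t i = Kinv (\<lambda>r. \<sigma> r i) (s i)" for i
    have t: "0 \<le> t i \<and> \<sigma> (t i) i = s i" for i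
      using Kinv_nonneg[OF sK[rule_format] ] f_Kinv[OF sK[rule_format]] snn
      unfolding t_def nonneg_def by blast
    define rs where "rs = Max (range t)"
    obtain i1 where i1: "rs = t i1"
    proof -
      have "rs \<in> range t" unfolding rs_def by (rule Max_in) auto
      then show ?thesis using that by blast
    qed
    have trs: "t i \<le> rs" for i unfolding rs_def by (rule Max_ge) auto
    have rs0: "0 \<le> rs" using t[of i1] i1 by simp
    have sle: "\<forall>i. s i \<le> \<sigma> rs i"
    proof
      fix i
      have "\<sigma> (t i) i \<le> \<sigma> rs i" using classK_mono[OF classKinf_K[OF sK[rule_format]]] t[of i] trs[of i] by blast
      then show "s i \<le> \<sigma> rs i" using t[of i] by simp
    qed
    have snd: "nonneg (\<sigma> rs)" using classK_nonneg[OF classKinf_K[OF sK[rule_format]] rs0]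
      by (simp add: nonneg_def)
    have rspos: "0 < rs"
    proof -
      obtain j where "s j \<noteq> 0" using s0 by auto
      have "t j \<noteq> 0"
      proof
        assume "t j = 0"
        then have "s j = \<sigma> 0 j" using t[of j] by simp
        also have "\<dots> = 0" using classK_zero[OF classKinf_K[OF sK[rule_format, of j]]] by simp
        finally show False using \<open>s j \<noteq> 0\<close> by simp
      qed
      then show ?thesis using t[of j] trs[of j] by linarith
    qed
    define g where "g = G (\<sigma> rs) i1"
    have g0: "0 \<le> g" using G_nonneg[OF snd] by (simp add: g_def)
    have "GR \<rho> (\<sigma> rs) i1 \<le> \<sigma> rs i1" using dec rs0 by blast
    moreover have "\<sigma> rs i1 = s i1" using t[of i1] i1 by simp
    ultimately have 1: "g + \<rho> g \<le> s i1" by (simp add: GR_eq g_def)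
    have "s i1 \<le> GR rh s i1" using le by blast
    also have "\<dots> \<le> GR rh (\<sigma> rs) i1" using GR_mono[OF classKinf_K[OF rhK] snn sle] .
    also have "\<dots> = g + \<rho> g / 2" by (simp add: GR_eq g_def rh_def)
    finally have 2: "s i1 \<le> g + \<rho> g / 2" .
    have "\<rho> g \<le> 0" using 1 2 by linarith
    have "g = 0"
    proof (rule ccontr)
      assume "g \<noteq> 0"
      then have "0 < g" using g0 by simp
      then have "0 < \<rho> g" using classK_pos[OF rK'] by blast
      then show False using \<open>\<rho> g \<le> 0\<close> by simp
    qed
    then have "s i1 \<le> 0" using 2 classK_zero[OF rK'] by simp
    moreover have "0 < s i1"
    proof -
      have "0 < \<sigma> rs i1" using classK_pos[OF classKinf_K[OF sK[rule_format, of i1]] rspos] .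
      then show ?thesis using t[of i1] i1 by simp
    qed
    ultimately show False by simp
  qed
  then show ?thesis using rhK by blast
qed

end

theorem theorem4p15:
  fixes Iset :: "'i::finite \<Rightarrow> 'i set"
    and \<gamma> :: "'i \<Rightarrow> 'i \<Rightarrow> real \<Rightarrow> real"
    and \<mu> :: "'i \<Rightarrow> ('i \<Rightarrow> real) \<Rightarrow> real"
  assumes "gain_operator Iset \<gamma> \<mu>"
    and "unif_cont_mu \<mu>"
  defines "a \<equiv> (\<exists>\<rho>. class_Kinf \<rho> \<and> NJI (Gam_rho \<rho> Iset \<gamma> \<mu>))"
    and "b \<equiv> (\<exists>\<rho>. class_Kinf \<rho> \<and> uniform_NJI Iset (Gam_rho \<rho> Iset \<gamma> \<mu>))"
    and "c \<equiv> (\<exists>\<rho>. class_Kinf \<rho> \<and> oplus_MBI (Gam_rho \<rho> Iset \<gamma> \<mu>))"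
    and "d \<equiv> (\<exists>\<sigma>. path_strict_decay Iset \<gamma> \<mu> \<sigma>)"
    and "e \<equiv> (\<exists>\<rho>. class_Kinf \<rho> \<and> UGAS (Gam_rho \<rho> Iset \<gamma> \<mu>))"
  shows "(a \<longleftrightarrow> b) \<and> (a \<longleftrightarrow> c) \<and> (a \<longleftrightarrow> d) \<and> (a \<longleftrightarrow> e)"
proof -
  interpret gop Iset \<gamma> \<mu> using assms(1,2) by unfold_locales
  have A: "b \<and> c \<and> d \<and> e" if a
  proof -
    obtain \<rho> where rK: "class_Kinf \<rho>" and nji: "NJI (Gam_rho \<rho> Iset \<gamma> \<mu>)" using \<open>a\<close> a_def by blast
    interpret g: gopr Iset \<gamma> \<mu> \<rho> by unfold_locales (use rK nji in auto)
    obtain y where sc: "schain (Gam_rho g.rho2 Iset \<gamma> \<mu>) y" using g.schain_exists by blast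
    have r2: "class_Kinf g.rho2" by (rule g.rho2_Kinf)
    show ?thesis unfolding b_def c_def d_def e_def
      using UNJI_ok[OF r2 sc] MBI_ok[OF r2 sc] path_ok[OF r2 sc] UGAS_ok[OF r2 sc] r2 by blast
  qed
  have B: "a" if b using \<open>b\<close> b_to_a unfolding a_def b_def by blast
  have C: "a" if c using \<open>c\<close> c_to_a unfolding a_def c_def by blast
  have D: "a" if d using \<open>d\<close> d_to_a unfolding a_def d_def by blast
  have E: "a" if e using \<open>e\<close> e_to_a unfolding a_def e_def by blast
  show ?thesis using A B C D E by blast
qed

end
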